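(* Let $\pi^u$ be the prior on $p\times p$ symmetric matrices $\Sigma=(\sigma_{jk})$ under which, independently, for $1\le j<k\le p$: $\sigma_{kj}=\sigma_{jk}$, $\sigma_{jk}\mid\rho_{jk}\sim N\big(0,\frac{\rho_{jk}}{1-\rho_{jk}}\tau_1^2\big)$, $\rho_{jk}\sim\mathrm{Beta}(a,b)$, and for $j=1,\ldots,p$: $\sigma_{jj}\sim\mathrm{Gamma}(1,\lambda/2)$ (shape $1$, rate $\lambda/2$), with $\lambda>0$. Let $\mathcal{U}(\tau)=\{\Sigma\in\mathcal{C}_p:\tau^{-1}\le\lambda_{\min}(\Sigma)\le\lambda_{\max}(\Sigma)\le\tau\}$. If $a=b=1/2$, $\tau_1^2\asymp 1/(np^4\tau^2)$ and $\tau>3$, then $$\pi^u(\Sigma\in\mathcal{U}(\tau))>\Big\{\frac{\lambda\tau}{8}\exp\Big(-\frac{\lambda\tau}{4}-\frac{C}{\sqrt n}\Big)\Big\}^p$$ for some constant $C>0$.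
   Context: $\mathcal{C}_p$ is the set of $p\times p$ positive definite matrices. Here $n$ is the sample size, $p=p_n$ and $\tau_1=\tau_{1,n}$ depend on $n$, and $a_n\asymp b_n$ means $a_n/b_n$ is bounded above and away from zero. *)

theory Defs
  imports "HOL-Probability.Probability" "Jordan_Normal_Form.Char_Poly"
begin

definition beta_density :: "real \<Rightarrow> real \<Rightarrow> real \<Rightarrow> real" where
  "beta_density a b r =
     (if 0 < r \<and> r < 1 then r powr (a - 1) * (1 - r) powr (b - 1) / Beta a b else 0)"

definition gamma_density :: "real \<Rightarrow> real \<Rightarrow> real \<Rightarrow> real" where
  "gamma_density k r x =
     (if 0 < x then r powr k * x powr (k - 1) * exp (- r * x) / Gamma k else 0)"

definition offdiag_density :: "real \<Rightarrow> real \<Rightarrow> real \<Rightarrow> real \<Rightarrow> real" where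
  "offdiag_density a b tau1 x =
     (LINT rho : {0<..<1} | lborel.
        beta_density a b rho * normal_density 0 (tau1 * sqrt (rho / (1 - rho))) x)"

definition entry_idx :: "nat \<Rightarrow> (nat \<times> nat) set" where
  "entry_idx p = {(j, k). j \<le> k \<and> k < p}"

(* the prior pi^u, as a joint law of the independent free entries *)
definition prior_u :: "nat \<Rightarrow> real \<Rightarrow> real \<Rightarrow> real \<Rightarrow> real \<Rightarrow> (nat \<times> nat \<Rightarrow> real) measure" where
  "prior_u p a b tau1 lam =
     PiM (entry_idx p) (\<lambda>(j, k).
        if j = k then density lborel (gamma_density 1 (lam / 2))
        else density lborel (offdiag_density a b tau1))"

definition sym_mat_of :: "nat \<Rightarrow> (nat \<times> nat \<Rightarrow> real) \<Rightarrow> real mat" where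
  "sym_mat_of p s = mat p p (\<lambda>(i, j). s (min i j, max i j))"

definition pos_def_mats :: "nat \<Rightarrow> real mat set" where
  "pos_def_mats p = {A. A \<in> carrier_mat p p \<and> A\<^sup>T = A \<and>
      (\<forall>v \<in> carrier_vec p. v \<noteq> 0\<^sub>v p \<longrightarrow> v \<bullet> (A *\<^sub>v v) > 0)}"

definition lambda_min :: "real mat \<Rightarrow> real" where
  "lambda_min A = Min {k. eigenvalue A k}"

definition lambda_max :: "real mat \<Rightarrow> real" where
  "lambda_max A = Max {k. eigenvalue A k}"

definition U_set :: "nat \<Rightarrow> real \<Rightarrow> real mat set" where
  "U_set p tau = {A \<in> pos_def_mats p. 1 / tau \<le> lambda_min A \<and> lambda_min A \<le> lambda_max A
                                      \<and> lambda_max A \<le> tau}"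

end

theory Submission
  imports Defs
begin

definition qf :: "nat \<Rightarrow> (nat \<Rightarrow> nat \<Rightarrow> real) \<Rightarrow> (nat \<Rightarrow> real) \<Rightarrow> real" where
  "qf p c v = (\<Sum>i<p. \<Sum>j<p. v i * c i j * v j)"

definition nsq :: "nat \<Rightarrow> (nat \<Rightarrow> real) \<Rightarrow> real" where
  "nsq p v = (\<Sum>i<p. (v i)^2)"

lemma cont_coord: "continuous_on A (\<lambda>v::nat\<Rightarrow>real. v i)"
  by (rule continuous_on_subset[OF continuous_on_product_coordinates]) auto

lemma cont_nsq: "continuous_on A (\<lambda>v. nsq p v)"
  unfolding nsq_def by (intro continuous_intros cont_coord)

lemma cont_qf: "continuous_on A (\<lambda>v. qf p c v)"
  unfolding qf_def by (intro continuous_intros cont_coord)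

lemma nsq_nonneg: "0 \<le> nsq p v"
  unfolding nsq_def by (intro sum_nonneg) auto

lemma nsq_zero: "nsq p v = 0 \<Longrightarrow> i < p \<Longrightarrow> v i = 0"
  unfolding nsq_def by (subst (asm) sum_nonneg_eq_0_iff) auto

lemma qf_expand:
  assumes sym: "\<forall>i<p. \<forall>j<p. c i j = c j i"
  shows "qf p c (\<lambda>i. v i + t * w i) = qf p c v + 2 * t * (\<Sum>i<p. w i * (\<Sum>j<p. c i j * v j)) + t^2 * qf p c w"
proof -
  have swap: "(\<Sum>i<p. \<Sum>j<p. v i * c i j * w j) = (\<Sum>i<p. w i * (\<Sum>j<p. c i j * v j))"
  proof -
    have "(\<Sum>i<p. \<Sum>j<p. v i * c i j * w j) = (\<Sum>j<p. \<Sum>i<p. v i * c i j * w j)"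
      by (rule sum.swap)
    also have "\<dots> = (\<Sum>j<p. w j * (\<Sum>i<p. c j i * v i))"
      by (intro sum.cong refl) (auto simp: sum_distrib_left sym mult_ac)
    finally show ?thesis .
  qed
  have "qf p c (\<lambda>i. v i + t * w i) = (\<Sum>i<p. \<Sum>j<p. v i * c i j * v j + t * (v i * c i j * w j)
       + t * (w i * c i j * v j) + t^2 * (w i * c i j * w j))"
    unfolding qf_def by (intro sum.cong refl) (simp add: algebra_simps power2_eq_square)
  also have "\<dots> = qf p c v + t * (\<Sum>i<p. \<Sum>j<p. v i * c i j * w j) + t * (\<Sum>i<p. \<Sum>j<p. w i * c i j * v j)
       + t^2 * qf p c w"
    unfolding qf_def by (simp add: sum.distrib sum_distrib_left)
  also have "(\<Sum>i<p. \<Sum>j<p. w i * c i j * v j) = (\<Sum>i<p. w i * (\<Sum>j<p. c i j * v j))"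
    by (simp add: sum_distrib_left mult_ac)
  finally show ?thesis using swap by simp
qed

lemma nsq_expand:
  "nsq p (\<lambda>i. v i + t * w i) = nsq p v + 2 * t * (\<Sum>i<p. w i * v i) + t^2 * nsq p w"
  unfolding nsq_def by (simp add: sum.distrib sum_distrib_left power2_eq_square algebra_simps)

lemma min_eig:
  assumes p: "p \<ge> 1" and sym: "\<forall>i<p. \<forall>j<p. c i j = c j i"
  shows "\<exists>\<mu> v0. (\<exists>i<p. v0 i \<noteq> 0) \<and> (\<forall>i<p. (\<Sum>j<p. c i j * v0 j) = \<mu> * v0 i)
            \<and> (\<forall>v. \<mu> * nsq p v \<le> qf p c v)"
proof -
  define K :: "(nat \<Rightarrow> real) set" where "K = PiE UNIV (\<lambda>i. if i < p then {-1..1} else {0})"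
  have "compactin (product_topology (\<lambda>i. euclidean) UNIV) K"
    unfolding K_def compactin_PiE by (auto simp: compactin_euclidean_iff)
  hence cK: "compact K" by (simp add: euclidean_product_topology compactin_euclidean_iff)
  define S where "S = K \<inter> {v. nsq p v = 1}"
  have "closed {v. nsq p v = 1}"
    by (rule closed_Collect_eq) (auto intro: cont_nsq)
  hence cS: "compact S" unfolding S_def using cK by auto
  define e0 :: "nat \<Rightarrow> real" where "e0 = (\<lambda>i. if i = 0 then 1 else 0)"
  have "nsq p e0 = (\<Sum>i<p. if i = 0 then 1 else 0)"
    unfolding nsq_def by (intro sum.cong) (auto simp: e0_def)
  also have "\<dots> = 1" using p by simp
  finally have "e0 \<in> S" unfolding S_def K_def using p by (auto simp: e0_def)
  hence "S \<noteq> {}" by auto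
  from continuous_attains_inf[OF cS this cont_qf]
  obtain v0 where v0S: "v0 \<in> S" and v0min: "\<And>y. y \<in> S \<Longrightarrow> qf p c v0 \<le> qf p c y" by blast
  define \<mu> where "\<mu> = qf p c v0"
  have nv0: "nsq p v0 = 1" using v0S unfolding S_def by auto
  have bound: "\<mu> * nsq p v \<le> qf p c v" for v
  proof (cases "nsq p v = 0")
    case True
    hence "\<forall>i<p. v i = 0" using nsq_zero by blast
    hence "qf p c v = 0" unfolding qf_def by simp
    thus ?thesis using True by simp
  next
    case False
    hence npos: "nsq p v > 0" using nsq_nonneg[of p v] by linarith
    define r where "r = sqrt (nsq p v)"
    have r: "r > 0" "r^2 = nsq p v" using npos unfolding r_def by auto
    define u where "u = (\<lambda>i. if i < p then v i / r else 0)"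
    have "nsq p u = nsq p v / r^2" unfolding u_def nsq_def
      by (simp add: power_divide sum_divide_distrib[symmetric])
    hence nu: "nsq p u = 1" using r npos by simp
    have "\<bar>u i\<bar> \<le> 1" if "i < p" for i
    proof -
      have "(v i)^2 \<le> nsq p v" unfolding nsq_def
        using that by (intro member_le_sum) auto
      hence "(u i)^2 \<le> 1" using r npos that unfolding u_def by (simp add: power_divide divide_le_eq)
      thus ?thesis by (simp add: abs_square_le_1)
    qed
    hence uab: "-1 \<le> u i \<and> u i \<le> 1" if "i < p" for i using that by (simp add: abs_le_iff)
    have "u i \<in> (if i < p then {-1..1} else {0})" for i
      using uab[of i] by (cases "i < p") (auto simp: u_def)
    hence "u \<in> S" unfolding S_def K_def using nu by (simp add: PiE_iff)
    hence "\<mu> \<le> qf p c u" using v0min unfolding \<mu>_def by blast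
    also have "qf p c u = qf p c v / r^2" unfolding qf_def u_def
      by (simp add: power2_eq_square sum_divide_distrib)
    finally show ?thesis using r npos by (simp add: le_divide_eq)
  qed
  define g where "g = (\<lambda>i. (\<Sum>j<p. c i j * v0 j) - \<mu> * v0 i)"
  define b where "b = (\<Sum>i<p. (g i)^2)"
  define a where "a = qf p c g - \<mu> * nsq p g"
  have a0: "a \<ge> 0" using bound[of g] unfolding a_def by simp
  have key: "0 \<le> 2 * t * b + t^2 * a" for t
  proof -
    have "\<mu> * nsq p (\<lambda>i. v0 i + t * g i) \<le> qf p c (\<lambda>i. v0 i + t * g i)" by (rule bound)
    moreover have "(\<Sum>i<p. g i * (\<Sum>j<p. c i j * v0 j)) - \<mu> * (\<Sum>i<p. g i * v0 i) = b"
      unfolding b_def g_def by (simp add: sum_subtractf[symmetric] sum_distrib_left power2_eq_square algebra_simps)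
    ultimately show ?thesis
      unfolding qf_expand[OF sym] nsq_expand a_def using nv0 \<mu>_def
      by (simp add: algebra_simps)
  qed
  have "b = 0"
  proof -
    define t where "t = - b / (a + 1)"
    have "0 \<le> 2 * t * b + t^2 * a" by (rule key)
    hence "0 \<le> (2 * t * b + t^2 * a) * (a+1)^2" using a0 by simp
    have e1: "t * (a+1) = -b" unfolding t_def using a0 by simp
    have "(2 * t * b + t^2 * a) * (a+1)^2 = 2*b*(t*(a+1))*(a+1) + a*(t*(a+1))^2"
      by (simp add: power2_eq_square algebra_simps)
    also have "\<dots> = - (b^2 * (a + 2))" unfolding e1 by (simp add: power2_eq_square algebra_simps)
    finally have "0 \<le> - (b^2 * (a + 2))" using \<open>0 \<le> (2 * t * b + t^2 * a) * (a+1)^2\<close> by simp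
    hence "b^2 * (a + 2) \<le> 0" by simp
    moreover have "b^2 * (a+2) \<ge> 0" using a0 by simp
    ultimately have "b^2 * (a+2) = 0" by linarith
    thus "b = 0" using a0 by simp
  qed
  hence "\<forall>i<p. g i = 0" unfolding b_def by (subst (asm) sum_nonneg_eq_0_iff) auto
  hence eig: "\<forall>i<p. (\<Sum>j<p. c i j * v0 j) = \<mu> * v0 i" unfolding g_def by simp
  have "\<exists>i<p. v0 i \<noteq> 0" using nv0 nsq_zero[of p v0] by (metis nsq_def sum.neutral zero_neq_one power_zero_numeral lessThan_iff)
  thus ?thesis using eig bound by blast
qed

lemma qf_eig: "(\<forall>i<p. (\<Sum>j<p. c i j * v j) = m * v i) \<Longrightarrow> qf p c v = m * nsq p v"
proof -
  assume h: "\<forall>i<p. (\<Sum>j<p. c i j * v j) = m * v i"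
  have "qf p c v = (\<Sum>i<p. v i * (\<Sum>j<p. c i j * v j))"
    unfolding qf_def by (simp add: sum_distrib_left mult_ac)
  also have "\<dots> = (\<Sum>i<p. m * (v i)^2)" using h by (intro sum.cong) (auto simp: power2_eq_square)
  finally show ?thesis by (simp add: nsq_def sum_distrib_left)
qed

lemma quad_vec: "A \<in> carrier_mat p p \<Longrightarrow> v \<in> carrier_vec p \<Longrightarrow>
   v \<bullet> (A *\<^sub>v v) = qf p (\<lambda>i j. A $$ (i,j)) (\<lambda>i. v $ i)"
  unfolding qf_def
  by (auto simp: scalar_prod_def lessThan_atLeast0 sum_distrib_left mult_ac intro!: sum.cong)

lemma nsq_vec: "v \<in> carrier_vec p \<Longrightarrow> v \<bullet> v = nsq p (\<lambda>i. v $ i)"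
  unfolding nsq_def scalar_prod_def by (auto simp: lessThan_atLeast0 power2_eq_square)

lemma vec_nz: "v \<in> carrier_vec p \<Longrightarrow> v \<noteq> 0\<^sub>v p \<Longrightarrow> nsq p (\<lambda>i. v $ i) > 0"
proof -
  assume v: "v \<in> carrier_vec p" and nz: "v \<noteq> 0\<^sub>v p"
  have "nsq p (\<lambda>i. v $ i) \<noteq> 0"
  proof
    assume "nsq p (\<lambda>i. v $ i) = 0"
    hence "\<forall>i<p. v $ i = 0" using nsq_zero by blast
    hence "v = 0\<^sub>v p" using v by (intro eq_vecI) auto
    thus False using nz by simp
  qed
  thus ?thesis using nsq_nonneg[of p "\<lambda>i. v $ i"] by linarith
qed

lemma eig_vec:
  assumes A: "A \<in> carrier_mat p p" and nz: "\<exists>i<p. v0 i \<noteq> 0"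
    and ev: "\<forall>i<p. (\<Sum>j<p. A $$ (i,j) * v0 j) = m * v0 i"
  shows "eigenvalue A m"
proof -
  have "vec p v0 \<noteq> 0\<^sub>v p" using nz by (auto simp: vec_eq_iff)
  moreover have "A *\<^sub>v vec p v0 = m \<cdot>\<^sub>v vec p v0"
    using A ev by (intro eq_vecI) (auto simp: scalar_prod_def lessThan_atLeast0 mult_ac)
  ultimately show ?thesis using A unfolding eigenvalue_def eigenvector_def
    by (intro exI[of _ "vec p v0"]) auto
qed

lemma ev_bounds:
  assumes A: "A \<in> carrier_mat p p" and "eigenvalue A k"
    and lo: "\<forall>v. m * nsq p v \<le> qf p (\<lambda>i j. A $$ (i,j)) v"
    and hi: "\<forall>v. qf p (\<lambda>i j. A $$ (i,j)) v \<le> M * nsq p v"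
  shows "m \<le> k \<and> k \<le> M"
proof -
  obtain w where w: "w \<in> carrier_vec p" "w \<noteq> 0\<^sub>v p" "A *\<^sub>v w = k \<cdot>\<^sub>v w"
    using assms(2) A unfolding eigenvalue_def eigenvector_def by auto
  have "w \<bullet> (A *\<^sub>v w) = k * (w \<bullet> w)" using w by simp
  hence q: "qf p (\<lambda>i j. A $$ (i,j)) (\<lambda>i. w $ i) = k * nsq p (\<lambda>i. w $ i)"
    using quad_vec[OF A w(1)] nsq_vec[OF w(1)] by simp
  have pos: "nsq p (\<lambda>i. w $ i) > 0" using vec_nz w by blast
  show ?thesis using lo[rule_format, of "\<lambda>i. w $ i"] hi[rule_format, of "\<lambda>i. w $ i"] q pos
    by (simp add: mult_le_cancel_right_pos)
qed

lemma U_char: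
  assumes A: "A \<in> carrier_mat p p" and T: "A\<^sup>T = A" and p: "p \<ge> 1" and tau: "tau > 0"
  shows "A \<in> U_set p tau \<longleftrightarrow> (\<forall>v. nsq p v / tau \<le> qf p (\<lambda>i j. A $$ (i,j)) v
                                  \<and> qf p (\<lambda>i j. A $$ (i,j)) v \<le> tau * nsq p v)"
proof -
  define c where "c = (\<lambda>i j. A $$ (i,j))"
  have sym: "\<forall>i<p. \<forall>j<p. c i j = c j i"
  proof (intro allI impI)
    fix i j assume "i < p" "j < p"
    hence "A\<^sup>T $$ (j,i) = A $$ (i,j)" using A by simp
    thus "c i j = c j i" using T unfolding c_def by simp
  qed
  obtain \<mu> v0 where v0: "\<exists>i<p. v0 i \<noteq> 0" "\<forall>i<p. (\<Sum>j<p. c i j * v0 j) = \<mu> * v0 i"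
      and lo: "\<forall>v. \<mu> * nsq p v \<le> qf p c v"
    using min_eig[OF p sym] by blast
  have sym': "\<forall>i<p. \<forall>j<p. - c i j = - c j i" using sym by simp
  obtain \<mu>' v1 where v1: "\<exists>i<p. v1 i \<noteq> 0" "\<forall>i<p. (\<Sum>j<p. - c i j * v1 j) = \<mu>' * v1 i"
      and lo': "\<forall>v. \<mu>' * nsq p v \<le> qf p (\<lambda>i j. - c i j) v"
    using min_eig[OF p sym'] by blast
  define M where "M = - \<mu>'"
  have qfneg: "qf p (\<lambda>i j. - c i j) v = - qf p c v" for v
    unfolding qf_def by (simp add: sum_negf)
  have hi: "\<forall>v. qf p c v \<le> M * nsq p v"
  proof
    fix v show "qf p c v \<le> M * nsq p v" using lo'[rule_format, of v] unfolding qfneg M_def by linarith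
  qed
  have v1e: "\<forall>i<p. (\<Sum>j<p. c i j * v1 j) = M * v1 i"
  proof (intro allI impI)
    fix i assume "i < p"
    hence "(\<Sum>j<p. - c i j * v1 j) = \<mu>' * v1 i" using v1 by auto
    thus "(\<Sum>j<p. c i j * v1 j) = M * v1 i" unfolding M_def by (simp add: sum_negf)
  qed
  have e0: "eigenvalue A \<mu>" using eig_vec[OF A v0(1)] v0(2) unfolding c_def by simp
  have e1: "eigenvalue A M" using eig_vec[OF A v1(1)] v1e unfolding c_def by simp
  define Ev where "Ev = {k. eigenvalue A k}"
  have "char_poly A \<noteq> 0" using degree_monic_char_poly[OF A] by auto
  hence "finite {x. poly (char_poly A) x = 0}" by (rule poly_roots_finite)
  moreover have "Ev = {x. poly (char_poly A) x = 0}"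
    unfolding Ev_def using eigenvalue_root_char_poly[OF A] by auto
  ultimately have fin: "finite Ev" by simp
  have bnd: "\<mu> \<le> k \<and> k \<le> M" if "k \<in> Ev" for k
    using ev_bounds[OF A _ lo[unfolded c_def] hi[unfolded c_def]] that unfolding Ev_def by auto
  have lmin: "lambda_min A = \<mu>" unfolding lambda_min_def Ev_def[symmetric]
    using fin bnd e0 by (intro Min_eqI) (auto simp: Ev_def)
  have lmax: "lambda_max A = M" unfolding lambda_max_def Ev_def[symmetric]
    using fin bnd e1 by (intro Max_eqI) (auto simp: Ev_def)
  have q0: "qf p c v0 = \<mu> * nsq p v0" using qf_eig v0(2) by blast
  have q1: "qf p c v1 = M * nsq p v1" using qf_eig v1e by blast
  have n0: "nsq p v0 > 0" using v0(1) nsq_zero[of p v0] nsq_nonneg[of p v0] by force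
  have n1: "nsq p v1 > 0" using v1(1) nsq_zero[of p v1] nsq_nonneg[of p v1] by force
  show ?thesis
  proof
    assume U: "A \<in> U_set p tau"
    hence b: "1 / tau \<le> \<mu>" "M \<le> tau" unfolding U_set_def using lmin lmax by auto
    show "\<forall>v. nsq p v / tau \<le> qf p (\<lambda>i j. A $$ (i,j)) v \<and> qf p (\<lambda>i j. A $$ (i,j)) v \<le> tau * nsq p v"
    proof
      fix v
      have nn: "nsq p v \<ge> 0" by (rule nsq_nonneg)
      have "nsq p v / tau \<le> \<mu> * nsq p v" using mult_right_mono[OF b(1) nn] by simp
      moreover have "M * nsq p v \<le> tau * nsq p v" using mult_right_mono[OF b(2) nn] .
      ultimately show "nsq p v / tau \<le> qf p (\<lambda>i j. A $$ (i,j)) v \<and> qf p (\<lambda>i j. A $$ (i,j)) v \<le> tau * nsq p v"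
        using lo hi unfolding c_def by (meson order_trans)
    qed
  next
    assume R: "\<forall>v. nsq p v / tau \<le> qf p (\<lambda>i j. A $$ (i,j)) v \<and> qf p (\<lambda>i j. A $$ (i,j)) v \<le> tau * nsq p v"
    hence R': "\<forall>v. nsq p v / tau \<le> qf p c v \<and> qf p c v \<le> tau * nsq p v" unfolding c_def .
    have PD: "A \<in> pos_def_mats p" unfolding pos_def_mats_def
    proof (intro CollectI conjI ballI impI)
      fix v :: "real vec" assume v: "v \<in> carrier_vec p" "v \<noteq> 0\<^sub>v p"
      have "0 < nsq p (\<lambda>i. v $ i) / tau" using vec_nz[OF v] tau by simp
      also have "\<dots> \<le> v \<bullet> (A *\<^sub>v v)" using R quad_vec[OF A v(1)] by simp
      finally show "0 < v \<bullet> (A *\<^sub>v v)" .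
    qed (use A T in auto)
    have "nsq p v0 / tau \<le> \<mu> * nsq p v0" using R'[rule_format, of v0] q0 by simp
    hence m1: "1 / tau \<le> \<mu>" using n0 tau by (simp add: field_simps)
    have "M * nsq p v1 \<le> tau * nsq p v1" using R'[rule_format, of v1] q1 by simp
    hence m2: "M \<le> tau" using n1 by simp
    have "\<mu> * nsq p v0 \<le> M * nsq p v0" using hi q0 by metis
    hence m3: "\<mu> \<le> M" using n0 by simp
    show "A \<in> U_set p tau" unfolding U_set_def using lmin lmax PD m1 m2 m3 by auto
  qed
qed

lemma diag_dom:
  assumes d: "\<forall>i<p. d1 \<le> c i i \<and> c i i \<le> d2"
    and o: "\<forall>i<p. \<forall>j<p. i \<noteq> j \<longrightarrow> \<bar>c i j\<bar> \<le> \<epsilon>" and e: "\<epsilon> \<ge> 0"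
  shows "(d1 - p * \<epsilon>) * nsq p v \<le> qf p c v \<and> qf p c v \<le> (d2 + p * \<epsilon>) * nsq p v"
proof -
  define D where "D = (\<Sum>i<p. c i i * (v i)^2)"
  define Of where "Of = (\<Sum>i<p. \<Sum>j<p. (if i = j then 0 else v i * c i j * v j))"
  have "qf p c v = (\<Sum>i<p. \<Sum>j<p. (if i = j then c i i * (v i)^2 else 0) + (if i = j then 0 else v i * c i j * v j))"
    unfolding qf_def by (intro sum.cong refl) (auto simp: power2_eq_square mult_ac)
  also have "\<dots> = D + Of" unfolding D_def Of_def by (simp add: sum.distrib)
  finally have qDO: "qf p c v = D + Of" .
  have Obnd: "\<bar>Of\<bar> \<le> \<epsilon> * p * nsq p v"
  proof -
    have t: "\<bar>(if i = j then 0 else v i * c i j * v j)\<bar> \<le> \<epsilon> * ((v i)^2 + (v j)^2) / 2"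
      if "i < p" "j < p" for i j
    proof (cases "i = j")
      case True thus ?thesis using e by simp
    next
      case False
      have "\<bar>v i * c i j * v j\<bar> = \<bar>c i j\<bar> * (\<bar>v i\<bar> * \<bar>v j\<bar>)" by (simp add: abs_mult)
      also have "\<dots> \<le> \<epsilon> * (\<bar>v i\<bar> * \<bar>v j\<bar>)" using o that False by (intro mult_right_mono) auto
      also have "\<bar>v i\<bar> * \<bar>v j\<bar> \<le> ((v i)^2 + (v j)^2) / 2"
      proof -
        have "0 \<le> (\<bar>v i\<bar> - \<bar>v j\<bar>)^2" by simp
        thus ?thesis by (simp add: power2_eq_square algebra_simps)
      qed
      hence "\<epsilon> * (\<bar>v i\<bar> * \<bar>v j\<bar>) \<le> \<epsilon> * (((v i)^2 + (v j)^2) / 2)" using e by (rule mult_left_mono)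
      finally show ?thesis using False by simp
    qed
    have "\<bar>Of\<bar> \<le> (\<Sum>i<p. \<Sum>j<p. \<bar>(if i = j then 0 else v i * c i j * v j)\<bar>)"
      unfolding Of_def by (rule order_trans[OF sum_abs sum_mono]) (rule sum_abs)
    also have "\<dots> \<le> (\<Sum>i<p. \<Sum>j<p. \<epsilon> * ((v i)^2 + (v j)^2) / 2)"
      by (intro sum_mono t) auto
    also have "\<dots> = \<epsilon> / 2 * (\<Sum>i<p. \<Sum>j<p. (v i)^2 + (v j)^2)"
      by (simp add: sum_distrib_left)
    also have "(\<Sum>i<p. \<Sum>j<p. (v i)^2 + (v j)^2) = 2 * p * nsq p v"
      unfolding nsq_def by (simp add: sum.distrib sum_distrib_left[symmetric])
    finally show ?thesis by simp
  qed
  have "d1 * nsq p v \<le> D" unfolding D_def nsq_def sum_distrib_left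
    using d by (intro sum_mono mult_right_mono) auto
  moreover have "D \<le> d2 * nsq p v" unfolding D_def nsq_def sum_distrib_left
    using d by (intro sum_mono mult_right_mono) auto
  ultimately show ?thesis using qDO Obnd by (simp add: algebra_simps abs_le_iff)
qed

lemma rat_between: "e > 0 \<Longrightarrow> \<exists>q::rat. x < real_of_rat q \<and> real_of_rat q < x + e"
proof -
  assume "e > 0"
  then obtain r where "r \<in> \<rat>" "x < r" "r < x + e" using Rats_dense_in_real[of x "x + e"] by auto
  thus ?thesis by (metis Rats_cases)
qed

lemma rat_approx: "\<exists>X::nat \<Rightarrow> rat list. \<forall>i<p. (\<lambda>k. real_of_rat (X k ! i)) \<longlonglongrightarrow> v i"
proof -
  have "\<forall>k i. \<exists>q::rat. v i < real_of_rat q \<and> real_of_rat q < v i + inverse (real (Suc k))"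
    using rat_between by simp
  then obtain Q where Q: "\<And>k i. v i < real_of_rat (Q k i) \<and> real_of_rat (Q k i) < v i + inverse (real (Suc k))"
    by metis
  define X where "X = (\<lambda>k. map (Q k) [0..<p])"
  have "(\<lambda>k. real_of_rat (X k ! i)) \<longlonglongrightarrow> v i" if "i < p" for i
  proof (rule tendsto_sandwich[of "\<lambda>k. v i" _ _ "\<lambda>k. v i + inverse (real (Suc k))"])
    show "\<forall>\<^sub>F k in sequentially. v i \<le> real_of_rat (X k ! i)"
      using Q that by (auto simp: X_def less_imp_le)
    show "\<forall>\<^sub>F k in sequentially. real_of_rat (X k ! i) \<le> v i + inverse (real (Suc k))"
      using Q that by (auto simp: X_def less_imp_le)
    show "(\<lambda>k. v i + inverse (real (Suc k))) \<longlonglongrightarrow> v i"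
      using tendsto_add[OF tendsto_const LIMSEQ_inverse_real_of_nat, of "v i"] by simp
  qed simp
  thus ?thesis by blast
qed

lemma qf_tend: "(\<forall>i<p. (\<lambda>k. V k i) \<longlonglongrightarrow> v i) \<Longrightarrow> (\<lambda>k. qf p c (V k)) \<longlonglongrightarrow> qf p c v"
  unfolding qf_def by (intro tendsto_intros) auto

lemma nsq_tend: "(\<forall>i<p. (\<lambda>k. V k i) \<longlonglongrightarrow> v i) \<Longrightarrow> (\<lambda>k. nsq p (V k)) \<longlonglongrightarrow> nsq p v"
  unfolding nsq_def by (intro tendsto_intros) auto

definition Rq :: "nat \<Rightarrow> real \<Rightarrow> (nat \<Rightarrow> nat \<Rightarrow> real) \<Rightarrow> (nat \<Rightarrow> real) \<Rightarrow> bool" where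
  "Rq p tau c v \<longleftrightarrow> nsq p v / tau \<le> qf p c v \<and> qf p c v \<le> tau * nsq p v"

lemma Rq_rat: "(\<forall>xs::rat list. Rq p tau c (\<lambda>i. real_of_rat (xs ! i))) \<longleftrightarrow> (\<forall>v. Rq p tau c v)"
proof
  assume h: "\<forall>xs::rat list. Rq p tau c (\<lambda>i. real_of_rat (xs ! i))"
  show "\<forall>v. Rq p tau c v"
  proof
    fix v
    obtain X :: "nat \<Rightarrow> rat list" where X: "\<forall>i<p. (\<lambda>k. real_of_rat (X k ! i)) \<longlonglongrightarrow> v i"
      using rat_approx by blast
    have q: "(\<lambda>k. qf p c (\<lambda>i. real_of_rat (X k ! i))) \<longlonglongrightarrow> qf p c v" using qf_tend[OF X] .
    have n: "(\<lambda>k. nsq p (\<lambda>i. real_of_rat (X k ! i))) \<longlonglongrightarrow> nsq p v" using nsq_tend[OF X] .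
    have nt: "(\<lambda>k. nsq p (\<lambda>i. real_of_rat (X k ! i)) / tau) \<longlonglongrightarrow> nsq p v / tau"
      using tendsto_mult_right[OF n, of "inverse tau"] by (simp add: divide_inverse)
    have "nsq p v / tau \<le> qf p c v"
      by (rule LIMSEQ_le[OF nt q]) (use h in \<open>auto simp: Rq_def\<close>)
    moreover have "qf p c v \<le> tau * nsq p v"
      by (rule LIMSEQ_le[OF q tendsto_mult_left[OF n]]) (use h in \<open>auto simp: Rq_def\<close>)
    ultimately show "Rq p tau c v" by (simp add: Rq_def)
  qed
qed auto

lemma gamma1: "r > 0 \<Longrightarrow> gamma_density 1 r x = (if 0 < x then r * exp (- r * x) else 0)"
  by (simp add: gamma_density_def)

lemma diag_density_eq:
  assumes r: "r > 0"
  shows "density lborel (\<lambda>x. ennreal (gamma_density 1 r x)) = density lborel (\<lambda>x. ennreal (exponential_density r x))"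
proof (rule density_cong)
  show "AE x in lborel. ennreal (gamma_density 1 r x) = ennreal (exponential_density r x)"
    using AE_lborel_singleton[of 0]
    by eventually_elim (use r in \<open>auto simp: gamma1 exponential_density_def mult_ac\<close>)
qed (use r in \<open>auto simp: gamma1 exponential_density_def\<close>)

lemma diag_prob: "r > 0 \<Longrightarrow> prob_space (density lborel (gamma_density 1 r))"
  using diag_density_eq[of r] prob_space_exponential_density[of r] by simp

lemma diag_int:
  assumes r: "r > 0" and ab: "0 < a" "a \<le> b"
  shows "measure (density lborel (gamma_density 1 r)) {a..b} = exp (- r * a) - exp (- r * b)"
proof -
  have ftc: "((\<lambda>x. r * exp (- r * x)) has_integral ((- exp (- r * b)) - (- exp (- r * a)))) {a..b}"
    using ab(2)
  proof (rule fundamental_theorem_of_calculus)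
    fix x assume "x \<in> {a..b}"
    show "((\<lambda>x. - exp (- r * x)) has_vector_derivative r * exp (- r * x)) (at x within {a..b})"
      unfolding has_real_derivative_iff_has_vector_derivative[symmetric]
      by (auto intro!: derivative_eq_intros)
  qed
  have "emeasure (density lborel (gamma_density 1 r)) {a..b} = (\<integral>\<^sup>+x. ennreal (gamma_density 1 r x) * indicator {a..b} x \<partial>lborel)"
    by (rule emeasure_density) (auto simp: gamma_density_def)
  also have "\<dots> = (\<integral>\<^sup>+x. ennreal (r * exp (- r * x)) * indicator {a..b} x \<partial>lborel)"
    using ab r by (intro nn_integral_cong) (auto simp: gamma1 indicator_def)
  also have "\<dots> = ennreal (exp (- r * a) - exp (- r * b))"
    using nn_integral_has_integral_lebesgue'[OF _ ftc] r by simp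
  finally show ?thesis
    using ab r by (simp add: measure_def)
qed

definition Gk :: "real \<Rightarrow> real \<Rightarrow> real \<Rightarrow> real" where
  "Gk t x r = indicator {0<..<1} r * (beta_density (1/2) (1/2) r * normal_density 0 (t * sqrt (r / (1 - r))) x)"

lemma Gk_meas: "(\<lambda>(x, r). Gk t x r) \<in> borel_measurable (lborel \<Otimes>\<^sub>M lborel)"
  unfolding Gk_def beta_density_def normal_density_def by measurable

lemma Gk_meas': "(\<lambda>(x, r). ennreal (Gk t x r)) \<in> borel_measurable (lborel \<Otimes>\<^sub>M lborel)"
  using Gk_meas by measurable

lemma off_eq: "offdiag_density (1/2) (1/2) t x = integral\<^sup>L lborel (\<lambda>r. Gk t x r)"
  by (simp add: offdiag_density_def set_lebesgue_integral_def Gk_def)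

lemma off_meas: "offdiag_density (1/2) (1/2) t \<in> borel_measurable lborel"
proof -
  have "(\<lambda>x. integral\<^sup>L lborel (\<lambda>r. Gk t x r)) \<in> borel_measurable lborel"
    using Gk_meas by measurable
  thus ?thesis by (simp add: off_eq[abs_def])
qed

lemma Beta_half_pos: "Beta (1/2) (1/2) > (0::real)"
  by (simp add: Beta_altdef rGamma_inverse_Gamma)

lemma beta_nonneg: "beta_density (1/2) (1/2) r \<ge> 0"
  using Beta_half_pos by (simp add: beta_density_def)

lemma Gk_nonneg: "Gk t x r \<ge> 0"
  using beta_nonneg by (simp add: Gk_def)

lemma Gk_meas_r: "(\<lambda>r. Gk t x r) \<in> borel_measurable lborel"
  unfolding Gk_def beta_density_def normal_density_def by measurable

lemma norm_abs: "normal_density \<mu> \<sigma> x = normal_density \<mu> \<bar>\<sigma>\<bar> x"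
  by (simp add: normal_density_def)

lemma norm_total: "\<sigma> \<noteq> 0 \<Longrightarrow> (\<integral>\<^sup>+x. ennreal (normal_density 0 \<sigma> x) \<partial>lborel) = 1"
proof -
  assume s: "\<sigma> \<noteq> 0"
  hence s': "\<bar>\<sigma>\<bar> > 0" by simp
  have "(\<integral>\<^sup>+x. ennreal (normal_density 0 \<bar>\<sigma>\<bar> x) \<partial>lborel) = ennreal (\<integral>x. normal_density 0 \<bar>\<sigma>\<bar> x \<partial>lborel)"
    by (rule nn_integral_eq_integral) (use integrable_normal_density[OF s'] in auto)
  also have "\<dots> = 1" using integral_normal_density[OF s'] by simp
  finally show ?thesis by (subst norm_abs) simp
qed

lemma norm_sq: "\<sigma> \<noteq> 0 \<Longrightarrow> (\<integral>\<^sup>+x. ennreal (normal_density 0 \<sigma> x * x^2) \<partial>lborel) = ennreal (\<sigma>^2)"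
proof -
  assume s: "\<sigma> \<noteq> 0"
  hence s': "\<bar>\<sigma>\<bar> > 0" by simp
  have hb: "has_bochner_integral lborel (\<lambda>x. normal_density 0 \<bar>\<sigma>\<bar> x * (x - 0) ^ (2 * 1))
      (fact (2 * 1) / ((2 / \<bar>\<sigma>\<bar>\<^sup>2)^1 * fact 1))"
    by (rule normal_moment_even[OF s'])
  have v: "fact (2 * 1) / ((2 / \<bar>\<sigma>\<bar>\<^sup>2)^1 * fact 1) = (\<sigma>^2 :: real)"
    using s by (simp add: fact_numeral)
  have hb': "has_bochner_integral lborel (\<lambda>x. normal_density 0 \<sigma> x * x^2) (\<sigma>^2)"
    using hb unfolding v by (subst norm_abs) simp
  have "(\<integral>\<^sup>+x. ennreal (normal_density 0 \<sigma> x * x^2) \<partial>lborel) = ennreal (integral\<^sup>L lborel (\<lambda>x. normal_density 0 \<sigma> x * x^2))"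
    by (rule nn_integral_eq_integral) (use hb' in \<open>auto intro: integrable.intros\<close>)
  also have "\<dots> = ennreal (\<sigma>^2)" using hb' by (simp add: has_bochner_integral_integral_eq)
  finally show ?thesis .
qed

lemma tail_le:
  assumes s: "\<sigma> \<noteq> 0" and d: "\<delta> > 0"
  shows "(\<integral>\<^sup>+x. ennreal (normal_density 0 \<sigma> x) * indicator {x. \<delta> < \<bar>x\<bar>} x \<partial>lborel) \<le> ennreal (\<sigma>^2 / \<delta>^2)"
proof -
  have "(\<integral>\<^sup>+x. ennreal (normal_density 0 \<sigma> x) * indicator {x. \<delta> < \<bar>x\<bar>} x \<partial>lborel)
      \<le> (\<integral>\<^sup>+x. ennreal (normal_density 0 \<sigma> x * x^2) * ennreal (1 / \<delta>^2) \<partial>lborel)"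
  proof (rule nn_integral_mono)
    fix x
    show "ennreal (normal_density 0 \<sigma> x) * indicator {x. \<delta> < \<bar>x\<bar>} x \<le> ennreal (normal_density 0 \<sigma> x * x^2) * ennreal (1 / \<delta>^2)"
    proof (cases "\<delta> < \<bar>x\<bar>")
      case True
      hence "\<delta>^2 \<le> x^2" using d by (metis abs_le_square_iff abs_of_pos less_imp_le)
      hence "1 \<le> x^2 / \<delta>^2" using d by simp
      hence "normal_density 0 \<sigma> x \<le> normal_density 0 \<sigma> x * x^2 * (1 / \<delta>^2)"
        using mult_left_mono[OF \<open>1 \<le> x^2 / \<delta>^2\<close> normal_density_nonneg[of 0 \<sigma> x]] by simp
      thus ?thesis using True by (simp add: ennreal_mult'[symmetric] ennreal_leI)
    qed simp
  qed
  also have "\<dots> = (\<integral>\<^sup>+x. ennreal (normal_density 0 \<sigma> x * x^2) \<partial>lborel) * ennreal (1 / \<delta>^2)"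
    by (rule nn_integral_multc) measurable
  also have "\<dots> = ennreal (\<sigma>^2 / \<delta>^2)" using norm_sq[OF s] by (simp add: ennreal_mult'[symmetric])
  finally show ?thesis .
qed

lemma S_le1: "\<sigma> \<noteq> 0 \<Longrightarrow> (\<integral>\<^sup>+x. ennreal (normal_density 0 \<sigma> x) * indicator S x \<partial>lborel) \<le> 1"
proof -
  assume s: "\<sigma> \<noteq> 0"
  have "(\<integral>\<^sup>+x. ennreal (normal_density 0 \<sigma> x) * indicator S x \<partial>lborel) \<le> (\<integral>\<^sup>+x. ennreal (normal_density 0 \<sigma> x) \<partial>lborel)"
    by (intro nn_integral_mono) (auto simp: indicator_def)
  thus ?thesis using norm_total[OF s] by simp
qed

lemma inner:
  assumes [measurable]: "S \<in> sets borel"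
  shows "(\<integral>\<^sup>+x. ennreal (Gk t x r) * indicator S x \<partial>lborel)
    = ennreal (indicator {0<..<1} r * beta_density (1/2) (1/2) r) *
      (\<integral>\<^sup>+x. ennreal (normal_density 0 (t * sqrt (r / (1 - r))) x) * indicator S x \<partial>lborel)"
proof -
  have "(\<integral>\<^sup>+x. ennreal (Gk t x r) * indicator S x \<partial>lborel) =
     (\<integral>\<^sup>+x. ennreal (indicator {0<..<1} r * beta_density (1/2) (1/2) r) *
       (ennreal (normal_density 0 (t * sqrt (r / (1 - r))) x) * indicator S x) \<partial>lborel)"
    unfolding Gk_def using beta_nonneg[of r]
    by (intro nn_integral_cong) (simp add: ennreal_mult' mult_ac)
  also have "\<dots> = ennreal (indicator {0<..<1} r * beta_density (1/2) (1/2) r) *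
      (\<integral>\<^sup>+x. ennreal (normal_density 0 (t * sqrt (r / (1 - r))) x) * indicator S x \<partial>lborel)"
    by (rule nn_integral_cmult) measurable
  finally show ?thesis .
qed

lemma beta_total: "(\<integral>\<^sup>+r. ennreal (indicator {0<..<1} r * beta_density (1/2) (1/2) r) \<partial>lborel) = 1"
proof -
  define B :: real where "B = Beta (1/2) (1/2)"
  have B: "B > 0" using Beta_half_pos by (simp add: B_def)
  have hi: "((\<lambda>r. r powr (1/2 - 1) * (1 - r) powr (1/2 - 1) / B) has_integral B / B) {0..1}"
    using has_integral_Beta_real[of "1/2" "1/2"] unfolding B_def by (intro has_integral_divide) auto
  have "(\<integral>\<^sup>+r. ennreal (r powr (1/2 - 1) * (1 - r) powr (1/2 - 1) / B) * indicator {0..1} r \<partial>lborel) = ennreal (B / B)"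
    by (rule nn_integral_has_integral_lebesgue'[OF _ hi]) (use B in auto)
  also have "(\<integral>\<^sup>+r. ennreal (r powr (1/2 - 1) * (1 - r) powr (1/2 - 1) / B) * indicator {0..1} r \<partial>lborel)
      = (\<integral>\<^sup>+r. ennreal (indicator {0<..<1} r * beta_density (1/2) (1/2) r) \<partial>lborel)"
    by (intro nn_integral_cong) (auto simp: beta_density_def B_def indicator_def)
  finally show ?thesis using B by simp
qed

lemma sig_nz: "t \<noteq> 0 \<Longrightarrow> r \<in> {0<..<1} \<Longrightarrow> t * sqrt (r / (1 - r)) \<noteq> 0"
  by auto

lemma Fx_meas: "(\<lambda>x. \<integral>\<^sup>+r. ennreal (Gk t x r) \<partial>lborel) \<in> borel_measurable lborel"
  using Gk_meas' by measurable

lemma T_lemma: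
  assumes t: "t \<noteq> 0" and [measurable]: "S \<in> sets borel"
  shows "emeasure (density lborel (offdiag_density (1/2) (1/2) t)) S =
    (\<integral>\<^sup>+r. ennreal (indicator {0<..<1} r * beta_density (1/2) (1/2) r) *
      (\<integral>\<^sup>+x. ennreal (normal_density 0 (t * sqrt (r / (1 - r))) x) * indicator S x \<partial>lborel) \<partial>lborel)"
proof -
  define F where "F x = (\<integral>\<^sup>+r. ennreal (Gk t x r) \<partial>lborel)" for x
  have Fm: "F \<in> borel_measurable lborel" unfolding F_def[abs_def] by (rule Fx_meas)
  have inr: "(\<integral>\<^sup>+x. ennreal (Gk t x r) \<partial>lborel) = ennreal (indicator {0<..<1} r * beta_density (1/2) (1/2) r)" for r
  proof (cases "r \<in> {0<..<1}")
    case True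
    have "(\<integral>\<^sup>+x. ennreal (Gk t x r) \<partial>lborel) = (\<integral>\<^sup>+x. ennreal (Gk t x r) * indicator UNIV x \<partial>lborel)" by simp
    also have "\<dots> = ennreal (indicator {0<..<1} r * beta_density (1/2) (1/2) r) *
      (\<integral>\<^sup>+x. ennreal (normal_density 0 (t * sqrt (r / (1 - r))) x) * indicator UNIV x \<partial>lborel)"
      by (rule inner) simp
    also have "(\<integral>\<^sup>+x. ennreal (normal_density 0 (t * sqrt (r / (1 - r))) x) * indicator UNIV x \<partial>lborel) = 1"
      using norm_total[OF sig_nz[OF t True]] by simp
    finally show ?thesis by simp
  next
    case False thus ?thesis by (simp add: Gk_def)
  qed
  have tot: "(\<integral>\<^sup>+x. F x \<partial>lborel) = 1"
  proof -
    have "(\<integral>\<^sup>+x. F x \<partial>lborel) = (\<integral>\<^sup>+r. \<integral>\<^sup>+x. ennreal (Gk t x r) \<partial>lborel \<partial>lborel)"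
      unfolding F_def using lborel_pair.Fubini'[of "\<lambda>x r. ennreal (Gk t x r)"] Gk_meas' by simp
    also have "\<dots> = 1" unfolding inr by (rule beta_total)
    finally show ?thesis .
  qed
  have fin: "AE x in lborel. F x \<noteq> \<infinity>"
    by (rule nn_integral_PInf_AE[OF Fm]) (simp add: tot)
  have eqAE: "AE x in lborel. ennreal (offdiag_density (1/2) (1/2) t x) = F x"
    using fin
  proof eventually_elim
    fix x assume Fx: "F x \<noteq> \<infinity>"
    have int: "integrable lborel (\<lambda>r. Gk t x r)"
    proof (rule integrableI_nn_integral_finite[where x="enn2real (F x)"])
      show "(\<lambda>r. Gk t x r) \<in> borel_measurable lborel" by (rule Gk_meas_r)
      show "AE r in lborel. 0 \<le> Gk t x r" by (simp add: Gk_nonneg)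
      show "(\<integral>\<^sup>+r. ennreal (Gk t x r) \<partial>lborel) = ennreal (enn2real (F x))"
        using Fx unfolding F_def by (simp add: ennreal_enn2real_if)
    qed
    have "F x = ennreal (integral\<^sup>L lborel (\<lambda>r. Gk t x r))"
      unfolding F_def by (rule nn_integral_eq_integral[OF int]) (simp add: Gk_nonneg)
    thus "ennreal (offdiag_density (1/2) (1/2) t x) = F x" by (simp add: off_eq)
  qed
  have "emeasure (density lborel (offdiag_density (1/2) (1/2) t)) S =
      (\<integral>\<^sup>+x. ennreal (offdiag_density (1/2) (1/2) t x) * indicator S x \<partial>lborel)"
    by (rule emeasure_density) (use off_meas in auto)
  also have "\<dots> = (\<integral>\<^sup>+x. F x * indicator S x \<partial>lborel)"
    using eqAE by (intro nn_integral_cong_AE) auto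
  also have "\<dots> = (\<integral>\<^sup>+x. \<integral>\<^sup>+r. ennreal (Gk t x r) * indicator S x \<partial>lborel \<partial>lborel)"
    unfolding F_def by (intro nn_integral_cong nn_integral_multc[symmetric]) (rule measurable_compose[OF Gk_meas_r], simp)
  also have "\<dots> = (\<integral>\<^sup>+r. \<integral>\<^sup>+x. ennreal (Gk t x r) * indicator S x \<partial>lborel \<partial>lborel)"
    using lborel_pair.Fubini'[of "\<lambda>x r. ennreal (Gk t x r) * indicator S x"] Gk_meas' by simp
  also have "\<dots> = (\<integral>\<^sup>+r. ennreal (indicator {0<..<1} r * beta_density (1/2) (1/2) r) *
      (\<integral>\<^sup>+x. ennreal (normal_density 0 (t * sqrt (r / (1 - r))) x) * indicator S x \<partial>lborel) \<partial>lborel)"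
    by (intro nn_integral_cong inner) simp
  finally show ?thesis .
qed

lemma off_prob: "t \<noteq> 0 \<Longrightarrow> prob_space (density lborel (offdiag_density (1/2) (1/2) t))"
proof
  assume t: "t \<noteq> 0"
  have "emeasure (density lborel (offdiag_density (1/2) (1/2) t)) UNIV =
    (\<integral>\<^sup>+r. ennreal (indicator {0<..<1} r * beta_density (1/2) (1/2) r) *
      (\<integral>\<^sup>+x. ennreal (normal_density 0 (t * sqrt (r / (1 - r))) x) * indicator UNIV x \<partial>lborel) \<partial>lborel)"
    by (rule T_lemma[OF t]) simp
  also have "\<dots> = (\<integral>\<^sup>+r. ennreal (indicator {0<..<1} r * beta_density (1/2) (1/2) r) \<partial>lborel)"
  proof (intro nn_integral_cong)
    fix r show "ennreal (indicator {0<..<1} r * beta_density (1/2) (1/2) r) *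
      (\<integral>\<^sup>+x. ennreal (normal_density 0 (t * sqrt (r / (1 - r))) x) * indicator UNIV x \<partial>lborel)
      = ennreal (indicator {0<..<1} r * beta_density (1/2) (1/2) r)"
      using norm_total[OF sig_nz[OF t]] by (cases "r \<in> {0<..<1}") auto
  qed
  also have "\<dots> = 1" by (rule beta_total)
  finally show "emeasure (density lborel (offdiag_density (1/2) (1/2) t)) (space (density lborel (offdiag_density (1/2) (1/2) t))) = 1"
    by simp
qed

lemma beta_form:
  assumes "0 < r" "r < 1"
  shows "beta_density (1/2) (1/2) r = 1 / (Beta (1/2) (1/2) * sqrt r * sqrt (1 - r))"
proof -
  have a: "x powr (1/2 - 1) = 1 / sqrt x" if "x > 0" for x :: real
  proof -
    have "x powr (1/2 - 1) = x powr (- (1/2))" by simp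
    also have "\<dots> = 1 / x powr (1/2)" by (simp add: powr_minus_divide)
    also have "\<dots> = 1 / sqrt x" using that by (simp add: powr_half_sqrt)
    finally show ?thesis .
  qed
  show ?thesis using assms a[of r] a[of "1-r"] by (simp add: beta_density_def)
qed

lemma ftc_a:
  assumes eta: "0 < eta" "eta < 1" and B: "B > 0"
  shows "((\<lambda>r. c / (B * ((1 - r) * sqrt (1 - r)))) has_integral (2 * c / (B * sqrt eta) - 2 * c / B)) {0..1 - eta}"
proof -
  have "((\<lambda>r. c / (B * ((1 - r) * sqrt (1 - r)))) has_integral
        ((\<lambda>r. 2 * c / (B * sqrt (1 - r))) (1 - eta) - (\<lambda>r. 2 * c / (B * sqrt (1 - r))) 0)) {0..1 - eta}"
  proof (rule fundamental_theorem_of_calculus)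
    show "0 \<le> 1 - eta" using eta by simp
    fix x assume x: "x \<in> {0..1 - eta}"
    hence x1: "1 - x > 0" using eta by auto
    have "((\<lambda>r. 2 * c / (B * sqrt (1 - r))) has_real_derivative c / (B * ((1 - x) * sqrt (1 - x)))) (at x within {0..1 - eta})"
      using x1 B
      by (auto intro!: derivative_eq_intros simp: field_simps power2_eq_square
               real_sqrt_mult[symmetric] simp del: real_sqrt_mult)
    thus "((\<lambda>r. 2 * c / (B * sqrt (1 - r))) has_vector_derivative c / (B * ((1 - x) * sqrt (1 - x)))) (at x within {0..1 - eta})"
      by (simp add: has_real_derivative_iff_has_vector_derivative)
  qed
  thus ?thesis by simp
qed

lemma ftc_b:
  assumes eta: "0 < eta" "eta < 1" and B: "B > 0"
  shows "((\<lambda>r. 2 / (B * sqrt (1 - r))) has_integral (4 * sqrt eta / B)) {1 - eta..1}"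
proof -
  have "((\<lambda>r. 2 / (B * sqrt (1 - r))) has_integral
        ((\<lambda>r. - 4 * sqrt (1 - r) / B) 1 - (\<lambda>r. - 4 * sqrt (1 - r) / B) (1 - eta))) {1 - eta..1}"
  proof (rule fundamental_theorem_of_calculus_interior)
    show "1 - eta \<le> 1" using eta by simp
    show "continuous_on {1 - eta..1} (\<lambda>r. - 4 * sqrt (1 - r) / B)"
      using B by (intro continuous_intros) auto
    fix x assume x: "x \<in> {1 - eta<..<1}"
    hence x1: "1 - x > 0" by auto
    have "((\<lambda>r. - 4 * sqrt (1 - r) / B) has_real_derivative 2 / (B * sqrt (1 - x))) (at x)"
      using x1 B
      by (auto intro!: derivative_eq_intros simp: field_simps)
    thus "((\<lambda>r. - 4 * sqrt (1 - r) / B) has_vector_derivative 2 / (B * sqrt (1 - x))) (at x)"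
      by (simp add: has_real_derivative_iff_has_vector_derivative)
  qed
  thus ?thesis by simp
qed

lemma ftc_c:
  assumes a: "0 < a" and B: "B > 0"
  shows "((\<lambda>r. 1 / (B * sqrt r)) has_integral (2 * sqrt a / B)) {0..a}"
proof -
  have "((\<lambda>r. 1 / (B * sqrt r)) has_integral
        ((\<lambda>r. 2 * sqrt r / B) a - (\<lambda>r. 2 * sqrt r / B) 0)) {0..a}"
  proof (rule fundamental_theorem_of_calculus_interior)
    show "0 \<le> a" using a by simp
    show "continuous_on {0..a} (\<lambda>r. 2 * sqrt r / B)"
      using B by (intro continuous_intros) auto
    fix x assume x: "x \<in> {0<..<a}"
    hence x1: "x > 0" by auto
    have "((\<lambda>r. 2 * sqrt r / B) has_real_derivative 1 / (B * sqrt x)) (at x)"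
      using x1 B
      by (auto intro!: derivative_eq_intros simp: field_simps)
    thus "((\<lambda>r. 2 * sqrt r / B) has_vector_derivative 1 / (B * sqrt x)) (at x)"
      by (simp add: has_real_derivative_iff_has_vector_derivative)
  qed
  thus ?thesis by simp
qed

definition tailh :: "real \<Rightarrow> real \<Rightarrow> real \<Rightarrow> ennreal" where
  "tailh t \<delta> r = (\<integral>\<^sup>+x. ennreal (normal_density 0 (t * sqrt (r / (1 - r))) x) * indicator {x. \<delta> < \<bar>x\<bar>} x \<partial>lborel)"

lemma tail_set_meas: "{x::real. \<delta> < \<bar>x\<bar>} \<in> sets borel"
  by measurable

lemma tail_b:
  assumes t: "t \<noteq> 0" and d: "\<delta> > 0" and r: "0 < r" "r < 1"
  shows "tailh t \<delta> r \<le> 1 \<and> tailh t \<delta> r \<le> ennreal (t^2 / \<delta>^2 * r / (1 - r))"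
proof -
  have s: "t * sqrt (r / (1 - r)) \<noteq> 0" using t r by auto
  have sq: "(t * sqrt (r / (1 - r)))^2 = t^2 * (r / (1 - r))" using r
    by (simp add: power_mult_distrib)
  have e: "t^2 * (r / (1 - r)) / \<delta>^2 = t^2 / \<delta>^2 * r / (1 - r)" by simp
  show ?thesis using S_le1[OF s] tail_le[OF s d] unfolding tailh_def sq e by simp
qed

lemma qbar_eq:
  assumes t: "t \<noteq> 0"
  shows "emeasure (density lborel (offdiag_density (1/2) (1/2) t)) {x. \<delta> < \<bar>x\<bar>} =
    (\<integral>\<^sup>+r. ennreal (indicator {0<..<1} r * beta_density (1/2) (1/2) r) * tailh t \<delta> r \<partial>lborel)"
  unfolding tailh_def by (rule T_lemma[OF t tail_set_meas])

lemma real_b1_aux: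
  fixes s u c B :: real
  assumes s: "0 < s" "s \<le> 1" and u: "0 < u" and c: "c \<ge> 0" and B: "B > 0"
  shows "1 / (B * s * u) * (c * (s * s) / (u * u)) \<le> c / (B * ((u * u) * u))"
proof -
  have "1 / (B * s * u) * (c * (s * s) / (u * u)) = (c * s) / (B * ((u * u) * u))"
    using s u B by (simp add: field_simps)
  also have "\<dots> \<le> c / (B * ((u * u) * u))"
    using s u B c by (intro divide_right_mono) (auto intro!: mult_left_le)
  finally show ?thesis .
qed

lemma real_b1:
  assumes r: "0 < r" "r < 1" and c: "c \<ge> 0" and B: "B > 0"
  shows "1 / (B * sqrt r * sqrt (1 - r)) * (c * r / (1 - r)) \<le> c / (B * ((1 - r) * sqrt (1 - r)))"
proof -
  have sr: "r = sqrt r * sqrt r" "1 - r = sqrt (1 - r) * sqrt (1 - r)" using r by auto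
  have "1 / (B * sqrt r * sqrt (1 - r)) * (c * (sqrt r * sqrt r) / (sqrt (1 - r) * sqrt (1 - r)))
     \<le> c / (B * ((sqrt (1 - r) * sqrt (1 - r)) * sqrt (1 - r)))"
    using r by (intro real_b1_aux c B) auto
  thus ?thesis using sr by metis
qed

lemma real_b2:
  assumes r: "1/4 \<le> r" "r < 1" and B: "B > 0"
  shows "1 / (B * sqrt r * sqrt (1 - r)) \<le> 2 / (B * sqrt (1 - r))"
proof -
  have "sqrt (1/4) \<le> sqrt r" using r by (intro real_sqrt_le_mono) auto
  hence h: "1/2 \<le> sqrt r" by (simp add: real_sqrt_divide)
  have pos: "sqrt (1 - r) > 0" using r by auto
  have "1 / (B * sqrt r * sqrt (1 - r)) = (1 / sqrt r) * (1 / (B * sqrt (1 - r)))" by simp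
  also have "\<dots> \<le> 2 * (1 / (B * sqrt (1 - r)))"
    using h pos B r by (intro mult_right_mono) (auto simp: divide_le_eq)
  finally show ?thesis by simp
qed

lemma est1:
  assumes t: "t \<noteq> 0" and d: "\<delta> > 0" and eta: "0 < eta" "eta \<le> 1/2"
  defines "c \<equiv> t^2 / \<delta>^2" and "B \<equiv> Beta (1/2) (1/2)"
  shows "emeasure (density lborel (offdiag_density (1/2) (1/2) t)) {x. \<delta> < \<bar>x\<bar>}
           \<le> ennreal (2 * c / (B * sqrt eta) + 4 * sqrt eta / B)"
proof -
  have B: "B > 0" unfolding B_def by (rule Beta_half_pos)
  have c: "c \<ge> 0" unfolding c_def by simp
  define fa where "fa r = c / (B * ((1 - r) * sqrt (1 - r)))" for r
  define fb where "fb r = 2 / (B * sqrt (1 - r))" for r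
  have pw: "ennreal (indicator {0<..<1} r * beta_density (1/2) (1/2) r) * tailh t \<delta> r
      \<le> ennreal (fa r) * indicator {0..1-eta} r + ennreal (fb r) * indicator {1-eta..1} r" for r
  proof (cases "r \<in> {0<..<1}")
    case False thus ?thesis by simp
  next
    case True
    hence r: "0 < r" "r < 1" by auto
    have bf: "beta_density (1/2) (1/2) r = 1 / (B * sqrt r * sqrt (1 - r))"
      unfolding B_def by (rule beta_form[OF r])
    have bnn: "0 \<le> 1 / (B * sqrt r * sqrt (1 - r))" using B r by simp
    note tb = tail_b[OF t d r]
    show ?thesis
    proof (cases "r \<le> 1 - eta")
      case True
      have "ennreal (indicator {0<..<1} r * beta_density (1/2) (1/2) r) * tailh t \<delta> r
          = ennreal (1 / (B * sqrt r * sqrt (1 - r))) * tailh t \<delta> r" using r bf by simp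
      also have "\<dots> \<le> ennreal (1 / (B * sqrt r * sqrt (1 - r))) * ennreal (c * r / (1 - r))"
        using tb unfolding c_def by (intro mult_left_mono) auto
      also have "\<dots> = ennreal (1 / (B * sqrt r * sqrt (1 - r)) * (c * r / (1 - r)))"
        by (rule ennreal_mult[symmetric]) (use bnn c r in auto)
      also have "\<dots> \<le> ennreal (fa r)" unfolding fa_def
        by (intro ennreal_leI real_b1[OF r c B])
      also have "\<dots> \<le> ennreal (fa r) * indicator {0..1-eta} r + ennreal (fb r) * indicator {1-eta..1} r"
        using True r by simp
      finally show ?thesis .
    next
      case False
      have "ennreal (indicator {0<..<1} r * beta_density (1/2) (1/2) r) * tailh t \<delta> r
          = ennreal (1 / (B * sqrt r * sqrt (1 - r))) * tailh t \<delta> r" using r bf by simp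
      also have "\<dots> \<le> ennreal (1 / (B * sqrt r * sqrt (1 - r))) * 1"
        using tb by (intro mult_left_mono) auto
      also have "\<dots> \<le> ennreal (fb r)" unfolding fb_def
        using False eta r by (simp, intro ennreal_leI real_b2[OF _ _ B]) auto
      also have "\<dots> \<le> ennreal (fa r) * indicator {0..1-eta} r + ennreal (fb r) * indicator {1-eta..1} r"
        using False r by simp
      finally show ?thesis .
    qed
  qed
  have "emeasure (density lborel (offdiag_density (1/2) (1/2) t)) {x. \<delta> < \<bar>x\<bar>}
      \<le> (\<integral>\<^sup>+r. ennreal (fa r) * indicator {0..1-eta} r + ennreal (fb r) * indicator {1-eta..1} r \<partial>lborel)"
    unfolding qbar_eq[OF t] by (intro nn_integral_mono pw)
  also have "\<dots> = (\<integral>\<^sup>+r. ennreal (fa r) * indicator {0..1-eta} r \<partial>lborel) + (\<integral>\<^sup>+r. ennreal (fb r) * indicator {1-eta..1} r \<partial>lborel)"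
    by (rule nn_integral_add) (auto simp: fa_def fb_def)
  also have "(\<integral>\<^sup>+r. ennreal (fa r) * indicator {0..1-eta} r \<partial>lborel) = ennreal (2 * c / (B * sqrt eta) - 2 * c / B)"
    unfolding fa_def
    by (rule nn_integral_has_integral_lebesgue'[OF _ ftc_a]) (use eta B c in auto)
  also have "(\<integral>\<^sup>+r. ennreal (fb r) * indicator {1-eta..1} r \<partial>lborel) = ennreal (4 * sqrt eta / B)"
    unfolding fb_def
    by (rule nn_integral_has_integral_lebesgue'[OF _ ftc_b]) (use eta B in auto)
  also have "ennreal (2 * c / (B * sqrt eta) - 2 * c / B) + ennreal (4 * sqrt eta / B)
      \<le> ennreal (2 * c / (B * sqrt eta) + 4 * sqrt eta / B)"
  proof -
    have se: "sqrt eta \<le> 1" using eta by simp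
    have "2 * c / B \<le> 2 * c / (B * sqrt eta)"
      using B c eta se by (intro divide_left_mono) (auto intro!: mult_left_le)
    hence nn: "0 \<le> 2 * c / (B * sqrt eta) - 2 * c / B" by simp
    have "ennreal (2 * c / (B * sqrt eta) - 2 * c / B) + ennreal (4 * sqrt eta / B)
        = ennreal (2 * c / (B * sqrt eta) - 2 * c / B + 4 * sqrt eta / B)"
      using nn B eta by (intro ennreal_plus[symmetric]) auto
    also have "\<dots> \<le> ennreal (2 * c / (B * sqrt eta) + 4 * sqrt eta / B)"
      using B c by (intro ennreal_leI) auto
    finally show ?thesis .
  qed
  finally show ?thesis .
qed

lemma est2:
  assumes t: "t \<noteq> 0" and d: "\<delta> > 0"
  defines "c \<equiv> t^2 / \<delta>^2" and "B \<equiv> Beta (1/2) (1/2)"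
  defines "a \<equiv> 1 / (1 + 2 * c)"
  shows "emeasure (density lborel (offdiag_density (1/2) (1/2) t)) {x. \<delta> < \<bar>x\<bar>} + ennreal (sqrt a / B) \<le> 1"
proof -
  have B: "B > 0" unfolding B_def by (rule Beta_half_pos)
  have c: "c > 0" unfolding c_def using t d by simp
  have a: "0 < a" "a < 1" unfolding a_def using c by auto
  define w where "w r = indicator {0<..<1} r * beta_density (1/2) (1/2) r" for r
  have wnn: "w r \<ge> 0" for r unfolding w_def using beta_nonneg[of r] by simp
  define W where "W = (\<integral>\<^sup>+r. ennreal (w r) * indicator {0<..a} r \<partial>lborel)"
  define R where "R = (\<integral>\<^sup>+r. ennreal (w r) * indicator {a<..<1} r \<partial>lborel)"
  have wm: "(\<lambda>r. w r) \<in> borel_measurable lborel" unfolding w_def beta_density_def by measurable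
  have pw: "ennreal (w r) * tailh t \<delta> r \<le> ennreal (w r) * indicator {0<..a} r * ennreal (1/2) + ennreal (w r) * indicator {a<..<1} r" for r
  proof (cases "r \<in> {0<..<1}")
    case False thus ?thesis by (simp add: w_def)
  next
    case True
    hence r: "0 < r" "r < 1" by auto
    note tb = tail_b[OF t d r]
    show ?thesis
    proof (cases "r \<le> a")
      case True
      have "r * (1 + 2 * c) \<le> 1" using True c unfolding a_def by (simp add: le_divide_eq)
      hence "c * r / (1 - r) \<le> 1/2" using r by (simp add: divide_le_eq algebra_simps)
      hence "tailh t \<delta> r \<le> ennreal (1/2)" using tb unfolding c_def
        by (meson ennreal_leI order_trans)
      hence "ennreal (w r) * tailh t \<delta> r \<le> ennreal (w r) * ennreal (1/2)" by (rule mult_left_mono) simp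
      thus ?thesis using True r by simp
    next
      case False
      have "ennreal (w r) * tailh t \<delta> r \<le> ennreal (w r) * 1" using tb by (intro mult_left_mono) auto
      thus ?thesis using False r by simp
    qed
  qed
  have q1: "emeasure (density lborel (offdiag_density (1/2) (1/2) t)) {x. \<delta> < \<bar>x\<bar>} \<le> W * ennreal (1/2) + R"
  proof -
    have "emeasure (density lborel (offdiag_density (1/2) (1/2) t)) {x. \<delta> < \<bar>x\<bar>}
        \<le> (\<integral>\<^sup>+r. ennreal (w r) * indicator {0<..a} r * ennreal (1/2) + ennreal (w r) * indicator {a<..<1} r \<partial>lborel)"
      unfolding qbar_eq[OF t] w_def[symmetric] by (intro nn_integral_mono pw)
    also have "\<dots> = (\<integral>\<^sup>+r. ennreal (w r) * indicator {0<..a} r * ennreal (1/2) \<partial>lborel) + R"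
      unfolding R_def by (rule nn_integral_add) (use wm in auto)
    also have "(\<integral>\<^sup>+r. ennreal (w r) * indicator {0<..a} r * ennreal (1/2) \<partial>lborel) = W * ennreal (1/2)"
      unfolding W_def by (rule nn_integral_multc) (use wm in auto)
    finally show ?thesis .
  qed
  have WR: "W + R = 1"
  proof -
    have "W + R = (\<integral>\<^sup>+r. ennreal (w r) * indicator {0<..a} r + ennreal (w r) * indicator {a<..<1} r \<partial>lborel)"
      unfolding W_def R_def by (rule nn_integral_add[symmetric]) (use wm in auto)
    also have "\<dots> = (\<integral>\<^sup>+r. ennreal (w r) \<partial>lborel)"
    proof (intro nn_integral_cong)
      fix r show "ennreal (w r) * indicator {0<..a} r + ennreal (w r) * indicator {a<..<1} r = ennreal (w r)"
        using a by (cases "r \<in> {0<..<1}") (auto simp: w_def indicator_def)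
    qed
    also have "\<dots> = 1" unfolding w_def by (rule beta_total)
    finally show ?thesis .
  qed
  have Wl: "ennreal (2 * sqrt a / B) \<le> W"
  proof -
    have "ennreal (2 * sqrt a / B) = (\<integral>\<^sup>+r. ennreal (1 / (B * sqrt r)) * indicator {0..a} r \<partial>lborel)"
      by (rule nn_integral_has_integral_lebesgue'[OF _ ftc_c[OF a(1) B], symmetric]) (use B in auto)
    also have "\<dots> \<le> W" unfolding W_def
    proof (intro nn_integral_mono)
      fix r show "ennreal (1 / (B * sqrt r)) * indicator {0..a} r \<le> ennreal (w r) * indicator {0<..a} r"
      proof (cases "r \<in> {0<..a}")
        case True
        hence r: "0 < r" "r < 1" using a by auto
        have "1 / (B * sqrt r) \<le> 1 / (B * sqrt r * sqrt (1 - r))"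
          using r B by (intro divide_left_mono) (auto intro!: mult_left_le)
        also have "\<dots> = w r" unfolding w_def using beta_form[OF r] r by (simp add: B_def)
        finally show ?thesis using True by (simp add: ennreal_leI)
      next
        case False thus ?thesis by (cases "r = 0") auto
      qed
    qed
    finally show ?thesis .
  qed
  have "ennreal (sqrt a / B) = ennreal (2 * sqrt a / B) * ennreal (1/2)"
    by (subst ennreal_mult[symmetric]) (use B a in auto)
  also have "\<dots> \<le> W * ennreal (1/2)" by (rule mult_right_mono[OF Wl]) simp
  finally have s: "ennreal (sqrt a / B) \<le> W * ennreal (1/2)" .
  have "emeasure (density lborel (offdiag_density (1/2) (1/2) t)) {x. \<delta> < \<bar>x\<bar>} + ennreal (sqrt a / B)
      \<le> (W * ennreal (1/2) + R) + W * ennreal (1/2)" by (intro add_mono q1 s)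
  also have "\<dots> = W * (ennreal (1/2) + ennreal (1/2)) + R" by (simp add: distrib_left add_ac)
  also have "ennreal (1/2) + ennreal (1/2) = 1" by (subst ennreal_plus[symmetric]) auto
  finally show ?thesis using WR by simp
qed

lemma q_lower1:
  assumes t: "t \<noteq> 0" and d: "\<delta> > 0" and c: "t^2 / \<delta>^2 \<le> 1/2"
  shows "measure (density lborel (offdiag_density (1/2) (1/2) t)) {-\<delta>..\<delta>} \<ge> 1 - 6 * sqrt (t^2 / \<delta>^2) / Beta (1/2) (1/2)"
proof -
  define c where "c = t^2 / \<delta>^2"
  define B :: real where "B = Beta (1/2) (1/2)"
  have B: "B > 0" unfolding B_def by (rule Beta_half_pos)
  have c0: "c > 0" unfolding c_def using t d by simp
  interpret P: prob_space "density lborel (offdiag_density (1/2) (1/2) t)" by (rule off_prob[OF t])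
  have "emeasure (density lborel (offdiag_density (1/2) (1/2) t)) {x. \<delta> < \<bar>x\<bar>}
         \<le> ennreal (2 * c / (B * sqrt c) + 4 * sqrt c / B)"
    unfolding c_def B_def by (rule est1[OF t d]) (use c0 c in \<open>auto simp: c_def\<close>)
  also have "2 * c / (B * sqrt c) + 4 * sqrt c / B = 6 * sqrt c / B"
  proof -
    have "c = sqrt c * sqrt c" using c0 by simp
    hence "2 * c / (B * sqrt c) = 2 * sqrt c / B" using c0 B by (metis (no_types, lifting) mult.commute nonzero_mult_divide_mult_cancel_right real_sqrt_gt_0_iff order_less_irrefl times_divide_eq_right)
    thus ?thesis by simp
  qed
  finally have e: "emeasure (density lborel (offdiag_density (1/2) (1/2) t)) {x. \<delta> < \<bar>x\<bar>} \<le> ennreal (6 * sqrt c / B)" .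
  have m: "P.prob {x. \<delta> < \<bar>x\<bar>} \<le> 6 * sqrt c / B"
    using e B c0 by (simp add: P.emeasure_eq_measure ennreal_le_iff)
  have "{-\<delta>..\<delta>} = space (density lborel (offdiag_density (1/2) (1/2) t)) - {x. \<delta> < \<bar>x\<bar>}"
    by auto
  hence "P.prob {-\<delta>..\<delta>} = 1 - P.prob {x. \<delta> < \<bar>x\<bar>}"
    using P.prob_compl[of "{x. \<delta> < \<bar>x\<bar>}"] tail_set_meas by simp
  thus ?thesis using m unfolding c_def B_def by simp
qed

lemma q_lower2:
  assumes t: "t \<noteq> 0" and d: "\<delta> > 0"
  shows "measure (density lborel (offdiag_density (1/2) (1/2) t)) {-\<delta>..\<delta>} \<ge> 1 / (Beta (1/2) (1/2) * sqrt (1 + 2 * (t^2 / \<delta>^2)))"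
proof -
  define c where "c = t^2 / \<delta>^2"
  define B :: real where "B = Beta (1/2) (1/2)"
  have B: "B > 0" unfolding B_def by (rule Beta_half_pos)
  have c0: "c > 0" unfolding c_def using t d by simp
  interpret P: prob_space "density lborel (offdiag_density (1/2) (1/2) t)" by (rule off_prob[OF t])
  have e: "ennreal (P.prob {x. \<delta> < \<bar>x\<bar>}) + ennreal (sqrt (1 / (1 + 2 * c)) / B) \<le> 1"
    using est2[OF t d] unfolding c_def B_def by (simp add: P.emeasure_eq_measure)
  have y0: "0 \<le> sqrt (1 / (1 + 2 * c)) / B" using B c0 by simp
  have "ennreal (P.prob {x. \<delta> < \<bar>x\<bar>} + sqrt (1 / (1 + 2 * c)) / B) \<le> 1"
    using e by (subst ennreal_plus[OF measure_nonneg y0])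
  hence "P.prob {x. \<delta> < \<bar>x\<bar>} + sqrt (1 / (1 + 2 * c)) / B \<le> 1" by simp
  moreover have "sqrt (1 / (1 + 2 * c)) / B = 1 / (B * sqrt (1 + 2 * c))"
    by (simp add: real_sqrt_divide)
  moreover have "{-\<delta>..\<delta>} = space (density lborel (offdiag_density (1/2) (1/2) t)) - {x. \<delta> < \<bar>x\<bar>}"
    by auto
  hence "P.prob {-\<delta>..\<delta>} = 1 - P.prob {x. \<delta> < \<bar>x\<bar>}"
    using P.prob_compl[of "{x. \<delta> < \<bar>x\<bar>}"] tail_set_meas by simp
  ultimately show ?thesis unfolding c_def B_def by simp
qed

lemma exp_strict: "(y::real) > 0 \<Longrightarrow> 1 + y < exp y"
proof -
  assume y: "y > 0"
  have "exp y = (exp (y/2))^2" using exp_double[of "y/2"] by simp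
  moreover have "1 + y/2 \<le> exp (y/2)" by (rule exp_ge_add_one_self)
  hence "(1 + y/2)^2 \<le> (exp (y/2))^2" using y by (intro power_mono) auto
  moreover have "1 + y < (1 + y/2)^2" using y by (simp add: power2_eq_square algebra_simps)
  ultimately show ?thesis by linarith
qed

lemma exp_le_1my: "0 \<le> (y::real) \<Longrightarrow> y \<le> 1/2 \<Longrightarrow> exp (- (2 * y)) \<le> 1 - y"
proof -
  assume y: "0 \<le> y" "y \<le> 1/2"
  have "1 + 2 * y \<le> exp (2 * y)" by (rule exp_ge_add_one_self)
  hence "exp (- (2 * y)) \<le> 1 / (1 + 2 * y)" using y by (simp add: exp_minus field_simps)
  also have "\<dots> \<le> 1 - y"
  proof -
    have "y * (2 * y) \<le> y * 1" using y by (intro mult_left_mono) auto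
    moreover have "(1 - y) * (1 + 2 * y) = 1 + y - y * (2 * y)" by (simp add: algebra_simps)
    ultimately have "1 \<le> (1 - y) * (1 + 2 * y)" by linarith
    thus ?thesis using y by (simp add: divide_le_eq)
  qed
  finally show ?thesis .
qed

lemma qd_bound:
  assumes lam: "lam > 0" and tau: "tau > 0"
  shows "measure (density lborel (gamma_density 1 (lam / 2))) {tau/4..tau/2} > lam * tau / 8 * exp (- lam * tau / 4)"
proof -
  define y where "y = lam * tau / 8"
  have y: "y > 0" using lam tau by (simp add: y_def)
  have "measure (density lborel (gamma_density 1 (lam / 2))) {tau/4..tau/2} = exp (- (lam/2) * (tau/4)) - exp (- (lam/2) * (tau/2))"
    by (rule diag_int) (use lam tau in auto)
  also have "\<dots> = exp (- y) - exp (- (2 * y))" unfolding y_def by (simp add: field_simps)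
  also have "exp (- y) = exp y * exp (- (2 * y))" by (simp add: exp_add[symmetric])
  finally have e: "measure (density lborel (gamma_density 1 (lam / 2))) {tau/4..tau/2} = (exp y - 1) * exp (- (2 * y))"
    by (simp add: algebra_simps)
  have "y * exp (- (2 * y)) < (exp y - 1) * exp (- (2 * y))"
    using exp_strict[OF y] by (intro mult_strict_right_mono) auto
  moreover have "lam * tau / 8 * exp (- lam * tau / 4) = y * exp (- (2 * y))"
    unfolding y_def by (simp add: field_simps)
  ultimately show ?thesis using e by simp
qed

lemma off_q_lower:
  assumes K: "K > 0"
  shows "\<exists>L>0. \<forall>t \<delta>. t \<noteq> 0 \<longrightarrow> \<delta> > 0 \<longrightarrow> \<bar>t\<bar> / \<delta> \<le> K \<longrightarrow>
           measure (density lborel (offdiag_density (1/2) (1/2) t)) {-\<delta>..\<delta>} \<ge> exp (- L * (\<bar>t\<bar> / \<delta>))"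
proof -
  define B :: real where "B = Beta (1/2) (1/2)"
  have B: "B > 0" unfolding B_def by (rule Beta_half_pos)
  define x0 :: real where "x0 = min (1/2) (B/12)"
  have x0: "x0 > 0" "x0 \<le> 1/2" "x0 \<le> B/12" using B by (auto simp: x0_def)
  define q0 where "q0 = 1 / (B * sqrt (1 + 2 * K^2))"
  have q0: "q0 > 0" using B unfolding q0_def by (simp add: add_pos_nonneg)
  define L where "L = max (12 / B) (\<bar>ln q0\<bar> / x0)"
  have L: "L > 0" "L \<ge> 12 / B" "L \<ge> \<bar>ln q0\<bar> / x0" using B unfolding L_def by (auto simp: less_max_iff_disj)
  show ?thesis
  proof (intro exI[of _ L] conjI allI impI)
    show "L > 0" by (rule L(1))
    fix t \<delta> :: real assume t: "t \<noteq> 0" and d: "\<delta> > 0" and xK: "\<bar>t\<bar> / \<delta> \<le> K"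
    define x where "x = \<bar>t\<bar> / \<delta>"
    have x: "x \<ge> 0" unfolding x_def using d by simp
    have cx: "t^2 / \<delta>^2 = x^2" unfolding x_def by (simp add: power_divide)
    have sc: "sqrt (t^2 / \<delta>^2) = x" unfolding cx using x by simp
    show "measure (density lborel (offdiag_density (1/2) (1/2) t)) {-\<delta>..\<delta>} \<ge> exp (- L * (\<bar>t\<bar> / \<delta>))"
    proof (cases "x \<le> x0")
      case True
      have "x^2 \<le> (1/2)^2" using True x0 x by (intro power_mono) auto
      hence c: "t^2 / \<delta>^2 \<le> 1/2" unfolding cx by (simp add: power2_eq_square)
      have "measure (density lborel (offdiag_density (1/2) (1/2) t)) {-\<delta>..\<delta>} \<ge> 1 - 6 * x / B"
        using q_lower1[OF t d c] unfolding sc B_def by simp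
      moreover have "exp (- (2 * (6 * x / B))) \<le> 1 - 6 * x / B"
      proof (rule exp_le_1my)
        show "0 \<le> 6 * x / B" using x B by simp
        have "6 * x \<le> 6 * (B / 12)" using True x0 by simp
        thus "6 * x / B \<le> 1/2" using B by (simp add: divide_le_eq)
      qed
      moreover have "exp (- L * x) \<le> exp (- (2 * (6 * x / B)))"
      proof -
        have "(12 / B) * x \<le> L * x" using L x by (intro mult_right_mono) auto
        thus ?thesis by (simp add: field_simps)
      qed
      ultimately show ?thesis unfolding x_def by linarith
    next
      case False
      have "x^2 \<le> K^2" using xK x unfolding x_def by (intro power_mono) auto
      hence "sqrt (1 + 2 * (t^2 / \<delta>^2)) \<le> sqrt (1 + 2 * K^2)" unfolding cx by simp
      hence "q0 \<le> 1 / (B * sqrt (1 + 2 * (t^2 / \<delta>^2)))" unfolding q0_def using B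
        by (intro divide_left_mono mult_left_mono mult_pos_pos) (auto intro: add_pos_nonneg)
      hence qq: "q0 \<le> measure (density lborel (offdiag_density (1/2) (1/2) t)) {-\<delta>..\<delta>}"
        using q_lower2[OF t d] unfolding B_def by linarith
      have "- ln q0 \<le> L * x0"
      proof -
        have "\<bar>ln q0\<bar> \<le> L * x0" using L(3) x0 by (simp add: divide_le_eq)
        thus ?thesis by linarith
      qed
      moreover have "L * x0 \<le> L * x" using False L by (intro mult_left_mono) auto
      ultimately have "- L * x \<le> ln q0" by linarith
      hence "exp (- L * x) \<le> q0" using q0 by (metis exp_le_cancel_iff exp_ln)
      thus ?thesis using qq unfolding x_def by linarith
    qed
  qed
qed

lemma entry_fin: "finite (entry_idx p)"
  by (rule finite_subset[of _ "{..<p} \<times> {..<p}"]) (auto simp: entry_idx_def)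

lemma comp_meas:
  assumes "e \<in> entry_idx p"
  shows "(\<lambda>s. s e) \<in> borel_measurable (prior_u p a b t lam)"
proof -
  define Mi where "Mi = (\<lambda>(j::nat, k::nat). if j = k then density lborel (gamma_density 1 (lam / 2))
        else density lborel (offdiag_density a b t))"
  have "(\<lambda>s. s e) \<in> measurable (PiM (entry_idx p) Mi) (Mi e)"
    by (rule measurable_component_singleton[OF assms])
  moreover have "sets (Mi e) = sets borel" by (cases e) (auto simp: Mi_def)
  ultimately show ?thesis unfolding prior_u_def Mi_def[symmetric]
    using measurable_cong_sets by blast
qed

definition cs :: "(nat \<times> nat \<Rightarrow> real) \<Rightarrow> nat \<Rightarrow> nat \<Rightarrow> real" where
  "cs s i j = s (min i j, max i j)"

lemma sym_carrier: "sym_mat_of p s \<in> carrier_mat p p"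
  by (simp add: sym_mat_of_def)

lemma sym_T: "(sym_mat_of p s)\<^sup>T = sym_mat_of p s"
  by (rule eq_matI) (auto simp: sym_mat_of_def min.commute max.commute)

lemma U_iff:
  assumes p: "p \<ge> 1" and tau: "tau > 0"
  shows "sym_mat_of p s \<in> U_set p tau \<longleftrightarrow> (\<forall>v. Rq p tau (cs s) v)"
proof -
  have q: "qf p (\<lambda>i j. sym_mat_of p s $$ (i, j)) v = qf p (cs s) v" for v
    unfolding qf_def by (intro sum.cong refl) (simp add: sym_mat_of_def cs_def)
  show ?thesis unfolding U_char[OF sym_carrier sym_T p tau] q Rq_def ..
qed

lemma E_meas:
  assumes p: "p \<ge> 1" and tau: "tau > 0"
  shows "{s \<in> space (prior_u p a b t lam). sym_mat_of p s \<in> U_set p tau} \<in> sets (prior_u p a b t lam)"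
proof -
  let ?M = "prior_u p a b t lam"
  have eq: "{s \<in> space ?M. sym_mat_of p s \<in> U_set p tau} =
      {s \<in> space ?M. \<forall>xs::rat list. Rq p tau (cs s) (\<lambda>i. real_of_rat (xs ! i))}"
    using U_iff[OF p tau] Rq_rat by blast
  have "{s \<in> space ?M. Rq p tau (cs s) v} \<in> sets ?M" for v
  proof -
    have qm[measurable]: "(\<lambda>s. qf p (cs s) v) \<in> borel_measurable ?M"
      unfolding qf_def cs_def
      by (intro borel_measurable_sum borel_measurable_times borel_measurable_const comp_meas)
         (auto simp: entry_idx_def)
    show ?thesis unfolding Rq_def by measurable
  qed
  thus ?thesis unfolding eq by (intro sets.sets_Collect_countable_All)
qed

lemma G_good:
  assumes p: "p \<ge> 1" and tau: "tau > 3"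
    and s: "s \<in> PiE (entry_idx p) (\<lambda>(j, k). if j = k then {tau/4..tau/2} else {-(1/(4*real p))..1/(4*real p)})"
  shows "Rq p tau (cs s) v"
proof -
  have d: "\<forall>i<p. tau/4 \<le> cs s i i \<and> cs s i i \<le> tau/2"
  proof (intro allI impI)
    fix i assume "i < p"
    hence "(i, i) \<in> entry_idx p" by (simp add: entry_idx_def)
    hence "s (i, i) \<in> {tau/4..tau/2}" using s by (auto simp: PiE_iff)
    thus "tau/4 \<le> cs s i i \<and> cs s i i \<le> tau/2" by (simp add: cs_def)
  qed
  have o: "\<forall>i<p. \<forall>j<p. i \<noteq> j \<longrightarrow> \<bar>cs s i j\<bar> \<le> 1/(4*real p)"
  proof (intro allI impI)
    fix i j assume ij: "i < p" "j < p" "i \<noteq> j"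
    hence "(min i j, max i j) \<in> entry_idx p" by (simp add: entry_idx_def)
    moreover have "min i j \<noteq> max i j" using ij by auto
    ultimately have "s (min i j, max i j) \<in> {-(1/(4*real p))..1/(4*real p)}" using s by (auto simp: PiE_iff)
    thus "\<bar>cs s i j\<bar> \<le> 1/(4*real p)" by (simp add: cs_def abs_le_iff)
  qed
  have pe: "real p * (1 / (4 * real p)) = 1/4" using p by simp
  from diag_dom[OF d o] p
  have b: "(tau/4 - 1/4) * nsq p v \<le> qf p (cs s) v \<and> qf p (cs s) v \<le> (tau/2 + 1/4) * nsq p v"
    unfolding pe by simp
  have n: "nsq p v \<ge> 0" by (rule nsq_nonneg)
  have "1 / tau \<le> tau/4 - 1/4"
  proof -
    have "1 / tau \<le> 1/3" using tau by (simp add: divide_le_eq)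
    thus ?thesis using tau by linarith
  qed
  hence "(1 / tau) * nsq p v \<le> (tau/4 - 1/4) * nsq p v"
    by (rule mult_right_mono[OF _ n])
  hence "nsq p v / tau \<le> (tau/4 - 1/4) * nsq p v" by simp
  moreover have "(tau/2 + 1/4) * nsq p v \<le> tau * nsq p v"
    using tau n by (intro mult_right_mono) auto
  ultimately show ?thesis using b unfolding Rq_def by linarith
qed

theorem lemma2:
  fixes p :: "nat \<Rightarrow> nat" and tau1 :: "nat \<Rightarrow> real" and lam tau :: real
  assumes lam: "lam > 0"
    and tau: "tau > 3"
    and p_pos: "\<forall>n. p n \<ge> 1"
    and tau1_rate: "\<exists>c1 c2. 0 < c1 \<and> 0 < c2 \<and> (\<forall>n \<ge> 1.
          c1 \<le> (tau1 n)\<^sup>2 / (1 / (real n * real (p n) ^ 4 * tau\<^sup>2)) \<and>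
          (tau1 n)\<^sup>2 / (1 / (real n * real (p n) ^ 4 * tau\<^sup>2)) \<le> c2)"
  shows "\<exists>C > 0. \<forall>n \<ge> 1.
           measure (prior_u (p n) (1/2) (1/2) (tau1 n) lam)
             {s \<in> space (prior_u (p n) (1/2) (1/2) (tau1 n) lam).
                sym_mat_of (p n) s \<in> U_set (p n) tau}
           > (lam * tau / 8 * exp (- lam * tau / 4 - C / sqrt (real n))) ^ p n"
proof -
  obtain c1 c2 where c12: "0 < c1" "0 < c2" and rate: "\<forall>n \<ge> 1.
          c1 \<le> (tau1 n)\<^sup>2 / (1 / (real n * real (p n) ^ 4 * tau\<^sup>2)) \<and>
          (tau1 n)\<^sup>2 / (1 / (real n * real (p n) ^ 4 * tau\<^sup>2)) \<le> c2"
    using tau1_rate by blast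
  define K where "K = 2 * sqrt c2"
  have K: "K > 0" using c12 by (simp add: K_def)
  obtain L where L: "L > 0" and Lq: "\<forall>t \<delta>. t \<noteq> 0 \<longrightarrow> \<delta> > 0 \<longrightarrow> \<bar>t\<bar> / \<delta> \<le> K \<longrightarrow>
           measure (density lborel (offdiag_density (1/2) (1/2) t)) {-\<delta>..\<delta>} \<ge> exp (- L * (\<bar>t\<bar> / \<delta>))"
    using off_q_lower[OF K] by blast
  define C where "C = L * K"
  have tau0: "tau > 0" using tau by simp
  show ?thesis
  proof (intro exI[of _ C] conjI allI impI)
    show "C > 0" using L K by (simp add: C_def)
    fix n :: nat assume n: "n \<ge> 1"
    define P where "P = p n"
    define t where "t = tau1 n"
    have P: "P \<ge> 1" using p_pos by (simp add: P_def)
    have Xpos: "real n * real P ^ 4 * tau\<^sup>2 > 0" using n P tau0 by simp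
    have rt: "c1 \<le> t\<^sup>2 * (real n * real P ^ 4 * tau\<^sup>2)" "t\<^sup>2 * (real n * real P ^ 4 * tau\<^sup>2) \<le> c2"
    proof -
      have r0: "c1 \<le> (tau1 n)\<^sup>2 / (1 / (real n * real (p n) ^ 4 * tau\<^sup>2)) \<and>
          (tau1 n)\<^sup>2 / (1 / (real n * real (p n) ^ 4 * tau\<^sup>2)) \<le> c2" using rate n by blast
      thus "c1 \<le> t\<^sup>2 * (real n * real P ^ 4 * tau\<^sup>2)" "t\<^sup>2 * (real n * real P ^ 4 * tau\<^sup>2) \<le> c2"
        unfolding P_def t_def by simp_all
    qed
    have t0: "t \<noteq> 0" using rt(1) c12 by auto
    define \<delta> where "\<delta> = 1 / (4 * real P)"
    have d: "\<delta> > 0" using P by (simp add: \<delta>_def)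
    define x where "x = \<bar>t\<bar> / \<delta>"
    have xe: "x = 4 * real P * \<bar>t\<bar>" by (simp add: x_def \<delta>_def)
    have x0: "x \<ge> 0" by (simp add: xe)
    have x2: "x^2 * (real n * real P ^ 2) \<le> K^2"
    proof -
      have "t\<^sup>2 * (real n * real P ^ 4) * 9 \<le> t\<^sup>2 * (real n * real P ^ 4) * tau\<^sup>2"
      proof (intro mult_left_mono)
        have "3^2 \<le> tau^2" using tau by (intro power_mono) auto
        thus "9 \<le> tau\<^sup>2" by simp
      qed simp
      also have "\<dots> \<le> c2" using rt(2) by (simp add: mult_ac)
      finally have a: "t\<^sup>2 * (real n * real P ^ 4) * 9 \<le> c2" .
      have xsq: "x^2 = 16 * real P^2 * t^2" by (simp add: xe power_mult_distrib)
      have "x^2 * (real n * real P ^ 2) = 16 * (t\<^sup>2 * (real n * real P ^ 4))"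
        unfolding xsq by (simp add: power2_eq_square power4_eq_xxxx algebra_simps)
      also have "\<dots> \<le> 16 * (c2 / 9)" using a by linarith
      also have "\<dots> \<le> K^2" using c12 by (simp add: K_def power_mult_distrib)
      finally show ?thesis .
    qed
    have sn: "sqrt (real n) \<ge> 1" using n by simp
    have xs: "x * (sqrt (real n) * real P) \<le> K"
    proof (rule power2_le_imp_le)
      show "(x * (sqrt (real n) * real P))^2 \<le> K^2" using x2 by (simp add: power_mult_distrib)
    qed (use K in simp)
    have xK: "x \<le> K"
    proof -
      have "x * 1 \<le> x * (sqrt (real n) * real P)"
        using x0 sn P by (intro mult_left_mono) (auto intro: order_trans[OF _ mult_mono[of 1 _ 1]])
      thus ?thesis using xs by simp
    qed
    have xp: "x * real P * real P \<le> K * real P / sqrt (real n)"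
    proof -
      have "x * real P \<le> K / sqrt (real n)" using xs sn by (simp add: le_divide_eq mult_ac)
      hence "x * real P * real P \<le> (K / sqrt (real n)) * real P" by (rule mult_right_mono) simp
      thus ?thesis by simp
    qed
    define Md where "Md = density lborel (gamma_density 1 (lam / 2))"
    define Mo where "Mo = density lborel (offdiag_density (1/2) (1/2) t)"
    define q where "q = measure Mo {-\<delta>..\<delta>}"
    define qd where "qd = measure Md {tau/4..tau/2}"
    have q: "q \<ge> exp (- L * x)" using Lq t0 d xK unfolding q_def Mo_def x_def by blast
    interpret PMo: prob_space Mo unfolding Mo_def by (rule off_prob[OF t0])
    interpret PMd: prob_space Md unfolding Md_def by (rule diag_prob) (use lam in simp)
    have q1: "q \<le> 1" unfolding q_def by simp
    have q0: "q \<ge> 0" unfolding q_def by simp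
    have qd: "qd > lam * tau / 8 * exp (- lam * tau / 4)" unfolding qd_def Md_def
      by (rule qd_bound[OF lam tau0])
    have qd0: "qd \<ge> 0" unfolding qd_def by simp
    define I where "I = entry_idx P"
    define Mi where "Mi = (\<lambda>(j::nat, k::nat). if j = k then Md else Mo)"
    have Mdef: "prior_u (p n) (1/2) (1/2) (tau1 n) lam = PiM I Mi"
      unfolding prior_u_def I_def Mi_def Md_def Mo_def P_def t_def ..
    have PS: "prob_space (Mi i)" for i
      by (cases i) (auto simp: Mi_def PMo.prob_space_axioms PMd.prob_space_axioms)
    have FPS: "finite_product_prob_space Mi I"
    proof -
      have "product_sigma_finite Mi" unfolding product_sigma_finite_def
        using PS prob_space_imp_sigma_finite by blast
      moreover have "finite I" unfolding I_def by (rule entry_fin)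
      ultimately show ?thesis
        unfolding finite_product_prob_space_def finite_product_sigma_finite_def
          finite_product_sigma_finite_axioms_def product_prob_space_def product_prob_space_axioms_def
        using PS by blast
    qed
    interpret FP: finite_product_prob_space Mi I by (rule FPS)
    define A where "A = (\<lambda>(j::nat, k::nat). if j = k then {tau/4..tau/2} else {-(1/(4*real P))..1/(4*real P)})"
    define E where "E = {s \<in> space (PiM I Mi). sym_mat_of P s \<in> U_set P tau}"
    have Emeas: "E \<in> sets (PiM I Mi)"
      unfolding E_def using E_meas[OF P tau0, of "1/2" "1/2" t lam]
      unfolding prior_u_def I_def[symmetric] Mi_def Md_def Mo_def by simp
    have Asets: "A i \<in> sets (Mi i)" for i
      by (cases i) (auto simp: A_def Mi_def Md_def Mo_def)
    have GE: "PiE I A \<subseteq> E"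
    proof
      fix s assume s: "s \<in> PiE I A"
      have "s \<in> space (PiM I Mi)" using s by (auto simp: space_PiM PiE_iff Mi_def Md_def Mo_def split: prod.splits)
      moreover have "\<forall>v. Rq P tau (cs s) v"
        using G_good[OF P tau] s unfolding I_def A_def by blast
      ultimately show "s \<in> E" unfolding E_def using U_iff[OF P tau0] by blast
    qed
    have mG: "measure (PiM I Mi) (PiE I A) \<le> measure (PiM I Mi) E"
      by (rule FP.finite_measure_mono[OF GE Emeas])
    have prodG: "measure (PiM I Mi) (PiE I A) = (\<Prod>e\<in>I. measure (Mi e) (A e))"
      by (rule FP.prob_times) (rule Asets)
    have mi: "measure (Mi e) (A e) = (if fst e = snd e then qd else q)" for e
      by (cases e) (auto simp: Mi_def A_def q_def qd_def \<delta>_def)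
    define D where "D = I \<inter> {e. fst e = snd e}"
    define O' where "O' = I \<inter> - {e. fst e = snd e}"
    have finI: "finite I" unfolding I_def by (rule entry_fin)
    have "(\<Prod>e\<in>I. measure (Mi e) (A e)) = (\<Prod>e\<in>I. if fst e = snd e then qd else q)"
      by (intro prod.cong refl) (rule mi)
    also have "\<dots> = (\<Prod>e\<in>D. qd) * (\<Prod>e\<in>O'. q)"
      unfolding D_def O'_def by (rule prod.If_cases[OF finI])
    also have "\<dots> = qd ^ card D * q ^ card O'" by simp
    finally have pe: "(\<Prod>e\<in>I. measure (Mi e) (A e)) = qd ^ card D * q ^ card O'" .
    have cD: "card D = P"
    proof -
      have "D = (\<lambda>j. (j, j)) ` {..<P}" unfolding D_def I_def entry_idx_def by auto
      moreover have "inj_on (\<lambda>j::nat. (j, j)) {..<P}" by (auto simp: inj_on_def)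
      ultimately show ?thesis by (simp add: card_image)
    qed
    have cO: "card O' \<le> P * P"
    proof -
      have "O' \<subseteq> {..<P} \<times> {..<P}" unfolding O'_def I_def entry_idx_def by auto
      hence "card O' \<le> card ({..<P} \<times> {..<P})" by (intro card_mono) auto
      thus ?thesis by (simp add: card_cartesian_product)
    qed
    have "q ^ (P * P) \<le> q ^ card O'" by (rule power_decreasing[OF cO q0 q1])
    moreover have "exp (- L * x) ^ (P * P) \<le> q ^ (P * P)"
      using q by (intro power_mono) auto
    moreover have "exp (- C / sqrt (real n)) ^ P \<le> exp (- L * x) ^ (P * P)"
    proof -
      have "exp (- L * x) ^ (P * P) = exp (real (P * P) * (- L * x))" by (rule exp_of_nat_mult[symmetric])
      moreover have "exp (- C / sqrt (real n)) ^ P = exp (real P * (- C / sqrt (real n)))"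
        by (rule exp_of_nat_mult[symmetric])
      moreover have "real P * (- C / sqrt (real n)) \<le> real (P * P) * (- L * x)"
      proof -
        have "L * (x * real P * real P) \<le> L * (K * real P / sqrt (real n))"
          using xp L by (intro mult_left_mono) auto
        thus ?thesis by (simp add: C_def algebra_simps)
      qed
      ultimately show ?thesis by simp
    qed
    ultimately have qO: "exp (- C / sqrt (real n)) ^ P \<le> q ^ card O'" by linarith
    have lowE: "qd ^ P * exp (- C / sqrt (real n)) ^ P \<le> measure (PiM I Mi) E"
    proof -
      have "qd ^ P * exp (- C / sqrt (real n)) ^ P \<le> qd ^ P * q ^ card O'"
        using qO qd0 by (intro mult_left_mono) auto
      also have "\<dots> = measure (PiM I Mi) (PiE I A)" using prodG pe cD by simp
      finally show ?thesis using mG by linarith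
    qed
    have strict: "(lam * tau / 8 * exp (- lam * tau / 4 - C / sqrt (real n))) ^ P < (qd * exp (- C / sqrt (real n))) ^ P"
    proof (rule power_strict_mono)
      have "lam * tau / 8 * exp (- lam * tau / 4 - C / sqrt (real n)) = (lam * tau / 8 * exp (- lam * tau / 4)) * exp (- C / sqrt (real n))"
      proof -
        have "- lam * tau / 4 - C / sqrt (real n) = (- lam * tau / 4) + (- C / sqrt (real n))" by simp
        hence "exp (- lam * tau / 4 - C / sqrt (real n)) = exp (- lam * tau / 4) * exp (- C / sqrt (real n))"
          by (simp only: exp_add)
        thus ?thesis by simp
      qed
      also have "\<dots> < qd * exp (- C / sqrt (real n))" using qd by (intro mult_strict_right_mono) auto
      finally show "lam * tau / 8 * exp (- lam * tau / 4 - C / sqrt (real n)) < qd * exp (- C / sqrt (real n))" .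
      show "0 \<le> lam * tau / 8 * exp (- lam * tau / 4 - C / sqrt (real n))" using lam tau0 by simp
      show "0 < P" using P by simp
    qed
    have "measure (prior_u (p n) (1/2) (1/2) (tau1 n) lam)
             {s \<in> space (prior_u (p n) (1/2) (1/2) (tau1 n) lam). sym_mat_of (p n) s \<in> U_set (p n) tau}
          = measure (PiM I Mi) E" unfolding Mdef E_def P_def ..
    thus "measure (prior_u (p n) (1/2) (1/2) (tau1 n) lam)
             {s \<in> space (prior_u (p n) (1/2) (1/2) (tau1 n) lam). sym_mat_of (p n) s \<in> U_set (p n) tau}
           > (lam * tau / 8 * exp (- lam * tau / 4 - C / sqrt (real n))) ^ p n"
      using strict lowE unfolding P_def by (simp add: power_mult_distrib)
  qed
qed

end
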